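(* Suppose that for every $k\in[K]$ there are positive numbers $I_k,J_k$ such that for every $\epsilon>0$ $$\sum_{n=1}^\infty\mathrm P_k^1\Big(\tfrac{\lambda_k(n)}{n}\le I_k-\epsilon\Big)<\infty,\qquad \sum_{n=1}^\infty\mathrm P_k^0\Big(\tfrac{-\lambda_k(n)}{n}\le J_k-\epsilon\Big)<\infty.$$ Let $A\subseteq[K]$, $i\in A$, $j\notin A$. Then, as $a,b\to\infty$, $$\mathrm E_A[\tilde T_i]\lesssim \frac{a}{I_i},\qquad \mathrm E_A[\tilde T_j]\lesssim\frac{b}{J_j}.$$ If moreover $l,u$ are integers with $0\le l\le u\le K$, $u>0$, $l<K$, and $A\in\Pi_{l,u}$, then: (i) if $l=u$, as $c,d\to\infty$, $$\mathrm E_A[\hat T_i]\lesssim\frac{c}{I_i+\mathcal J_A},\qquad \mathrm E_A[\hat T_j]\lesssim\frac{d}{J_j+\mathcal I_A},\qquad \mathrm E_A[\check T]\lesssim\frac{c\vee d}{\mathcal I_A+\mathcal J_A};$$ (ii) if $l<u$, as $a,b,c,d\to\infty$, $$\mathrm E_A[\hat T_i]\lesssim\begin{cases}\frac{a}{I_i}\wedge\frac{c}{I_i+\mathcal J_A},&|A|=l\\ \frac{a}{I_i},& l<|A|\le u,\end{cases}\qquad \mathrm E_A[\hat T_j]\lesssim\begin{cases}\frac{b}{J_j},& l\le|A|<u\\ \frac{b}{J_j}\wedge\frac{d}{J_j+\mathcal I_A},&|A|=u,\end{cases}$$ and $$\mathrm E_A[\check T]\lesssim\begin{cases}\max\{\frac{b}{\mathcal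 J_A},\ \frac{a}{\mathcal I_A}\wedge\frac{c}{\mathcal I_A+\mathcal J_A}\},&|A|=l\\ \max\{\frac{a}{\mathcal I_A},\frac{b}{\mathcal J_A}\},& l<|A|<u\\ \max\{\frac{a}{\mathcal I_A},\ \frac{b}{\mathcal J_A}\wedge\frac{d}{\mathcal J_A+\mathcal I_A}\},&|A|=u.\end{cases}$$ In particular, if $l<u$ and $a,b,c,d\to\infty$ so that $a\sim c$ and $b\sim d$, then $$\mathrm E_A[\hat T_i]\lesssim\frac{a}{I_i+\mathcal J_A\mathbf 1\{|A|=l\}},\qquad \mathrm E_A[\hat T_j]\lesssim\frac{b}{J_j+\mathcal I_A\mathbf 1\{|A|=u\}},$$ $$\mathrm E_A[\check T]\lesssim\max\Big\{\frac{a}{\mathcal I_A+\mathcal J_A\mathbf 1\{|A|=l\}},\ \frac{b}{\mathcal J_A+\mathcal I_A\mathbf 1\{|A|=u\}}\Big\}.$$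
   Context: Let $K\ge1$, $[K]=\{1,\dots,K\}$, $\mathbb N=\{1,2,\dots\}$. There are $K$ independent data streams $X_k=\{X_k(n):n\in\mathbb N\}$. Let $\mathcal F_k(n)=\sigma(X_k(t):t\le n)$, $\mathcal F(n)=\sigma(\mathcal F_k(n):k\in[K])$. For each $k$, $\mathrm P_k^0,\mathrm P_k^1$ are distributions for $X_k$, mutually absolutely continuous on each $\mathcal F_k(n)$, and $\lambda_k(n)=\log\frac{d\mathrm P_k^1}{d\mathrm P_k^0}(\mathcal F_k(n))$. For $A\subseteq[K]$, $\mathrm P_A$ is the joint law with independent streams, $X_k\sim\mathrm P_k^1$ for $k\in A$ and $X_k\sim\mathrm P_k^0$ for $k\notin A$; $\mathrm E_A$ its expectation. $\mathcal I_A=\min_{i\in A}I_i$, $\mathcal J_A=\min_{j\notin A}J_j$ (minimum over the empty set is $\infty$). $\lambda_{(1)}(n)\ge\dots\ge\lambda_{(K)}(n)$ are the ordered LLRs; $p(n)=|\{k:\lambda_k(n)>0\}|$; when needed $\lambda_{(0)}\equiv+\infty$, $\lambda_{(K+1)}\equiv-\infty$. $\Pi_{l,u}=\{A\subseteq[K]:l\le|A|\le u\}$. Parallel SPRT: $\tilde T_k=\inf\{n:\lambda_k(n)\notin(-b,a)\}$, $a,b>0$. Proposed procedure: $\hat T_k=\hat T_{k,1}\wedge\hat T_{k,2}$ where, if $l=u\equiv m$, $\hat T_{k,1}=\inf\{n:\lambda_k(n)\ge\lambda_{(m+1)}(n)+c\}$, $\hat T_{k,2}=\inf\{n:\lambda_k(n)\le\lambda_{(m)}(n)-d\}$;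 if $l<u$, $\hat T_{k,1}=\inf\{n:\lambda_k(n)\ge\min\{a,\lambda_{(l+1)}(n)+c\}\}$, $\hat T_{k,2}=\inf\{n:\lambda_k(n)\le\max\{-b,\lambda_{(u)}(n)-d\}\}$ (thresholds $a,b,c,d>0$). Synchronous procedure: common decision time $\check T$; if $l=u\equiv m$, $\check T=\inf\{n:\lambda_{(m)}(n)-\lambda_{(m+1)}(n)\ge c\vee d\}$; if $l<u$, $\check T=\tau_1\wedge\tau_2\wedge\tau_3$ with $\tau_1=\inf\{n:\lambda_{(l+1)}(n)\le\min\{-b,-c+\lambda_{(l)}(n)\}\}$, $\tau_2=\inf\{n:\lambda_k(n)\notin(-b,a)\ \forall k,\ l\le p(n)\le u\}$, $\tau_3=\inf\{n:\lambda_{(u)}(n)\ge\max\{a,d+\lambda_{(u+1)}(n)\}\}$. Notation: $x\lesssim y$ means $\limsup x/y\le1$ in the stated limit; $x\sim y$ means $x/y\to1$. *)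

theory Defs
  imports "HOL-Probability.Probability"
begin

text \<open>Path space of a single data stream with observation space M (time index 1,2,...; coordinate 0 unused).\<close>
definition path_space :: "'a measure \<Rightarrow> (nat \<Rightarrow> 'a) measure" where
  "path_space M = PiM UNIV (\<lambda>_::nat. M)"

text \<open>Natural filtration F_k(n) = sigma(X_k(t) : 1 <= t <= n) on the path space.\<close>
definition obs_filtration :: "'a measure \<Rightarrow> nat \<Rightarrow> (nat \<Rightarrow> 'a) measure" where
  "obs_filtration M n =
     vimage_algebra (space (path_space M)) (\<lambda>\<omega>. restrict \<omega> {1..n}) (PiM {1..n} (\<lambda>_. M))"

text \<open>lam n is (a version of) log dP1/dP0 restricted to F(n), for every n >= 1.\<close>
definition is_llr :: "'a measure \<Rightarrow> (nat \<Rightarrow> 'a) measure \<Rightarrow> (nat \<Rightarrow> 'a) measure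
                      \<Rightarrow> (nat \<Rightarrow> (nat \<Rightarrow> 'a) \<Rightarrow> real) \<Rightarrow> bool" where
  "is_llr M P0 P1 lam \<longleftrightarrow>
     (\<forall>n\<ge>1. lam n \<in> borel_measurable (obs_filtration M n) \<and>
        (\<forall>E\<in>sets (obs_filtration M n).
            emeasure P1 E = (\<integral>\<^sup>+\<omega>\<in>E. ennreal (exp (lam n \<omega>)) \<partial>P0)))"

text \<open>Joint law P_A of the K independent streams (a point of the sample space is the
  family of paths omega k, k in [K]).\<close>
definition joint_law :: "nat \<Rightarrow> (nat \<Rightarrow> (nat \<Rightarrow> 'a) measure) \<Rightarrow> (nat \<Rightarrow> (nat \<Rightarrow> 'a) measure)
                         \<Rightarrow> nat set \<Rightarrow> (nat \<Rightarrow> nat \<Rightarrow> 'a) measure" where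
  "joint_law K P0 P1 A = PiM {1..K} (\<lambda>k. if k \<in> A then P1 k else P0 k)"

definition expect_time :: "(nat \<Rightarrow> nat \<Rightarrow> 'a) measure \<Rightarrow> ((nat \<Rightarrow> nat \<Rightarrow> 'a) \<Rightarrow> enat) \<Rightarrow> ennreal" where
  "expect_time P T = (\<integral>\<^sup>+\<omega>. ennreal_of_enat (T \<omega>) \<partial>P)"

definition hit_time :: "(nat \<Rightarrow> bool) \<Rightarrow> enat" where
  "hit_time P = (if \<exists>n\<ge>1. P n then enat (LEAST n. 1 \<le> n \<and> P n) else \<infinity>)"

definition llr_vec :: "(nat \<Rightarrow> nat \<Rightarrow> (nat \<Rightarrow> 'a) \<Rightarrow> real) \<Rightarrow> (nat \<Rightarrow> nat \<Rightarrow> 'a) \<Rightarrow> nat \<Rightarrow> nat \<Rightarrow> real" where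
  "llr_vec lam \<omega> n = (\<lambda>k. lam k n (\<omega> k))"

definition ord_llr :: "nat \<Rightarrow> (nat \<Rightarrow> real) \<Rightarrow> nat \<Rightarrow> ereal" where
  "ord_llr K v m = (if m = 0 then \<infinity> else if K < m then -\<infinity>
                    else ereal (rev (sort (map v [1..<Suc K])) ! (m - 1)))"

definition num_pos :: "nat \<Rightarrow> (nat \<Rightarrow> real) \<Rightarrow> nat" where
  "num_pos K v = card {k \<in> {1..K}. v k > 0}"

definition sprt_time :: "(nat \<Rightarrow> nat \<Rightarrow> (nat \<Rightarrow> 'a) \<Rightarrow> real) \<Rightarrow> real \<Rightarrow> real \<Rightarrow> nat
                         \<Rightarrow> (nat \<Rightarrow> nat \<Rightarrow> 'a) \<Rightarrow> enat" where
  "sprt_time lam a b k \<omega> = hit_time (\<lambda>n. lam k n (\<omega> k) \<notin> {-b<..<a})"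

definition hat_time_eq :: "nat \<Rightarrow> nat \<Rightarrow> real \<Rightarrow> real \<Rightarrow> (nat \<Rightarrow> nat \<Rightarrow> (nat \<Rightarrow> 'a) \<Rightarrow> real)
                           \<Rightarrow> nat \<Rightarrow> (nat \<Rightarrow> nat \<Rightarrow> 'a) \<Rightarrow> enat" where
  "hat_time_eq K m c d lam k \<omega> =
     min (hit_time (\<lambda>n. ereal (lam k n (\<omega> k)) \<ge> ord_llr K (llr_vec lam \<omega> n) (m + 1) + ereal c))
         (hit_time (\<lambda>n. ereal (lam k n (\<omega> k)) \<le> ord_llr K (llr_vec lam \<omega> n) m - ereal d))"

definition hat_time_lt :: "nat \<Rightarrow> nat \<Rightarrow> nat \<Rightarrow> real \<Rightarrow> real \<Rightarrow> real \<Rightarrow> real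
                           \<Rightarrow> (nat \<Rightarrow> nat \<Rightarrow> (nat \<Rightarrow> 'a) \<Rightarrow> real)
                           \<Rightarrow> nat \<Rightarrow> (nat \<Rightarrow> nat \<Rightarrow> 'a) \<Rightarrow> enat" where
  "hat_time_lt K l u a b c d lam k \<omega> =
     min (hit_time (\<lambda>n. ereal (lam k n (\<omega> k)) \<ge>
                        min (ereal a) (ord_llr K (llr_vec lam \<omega> n) (l + 1) + ereal c)))
         (hit_time (\<lambda>n. ereal (lam k n (\<omega> k)) \<le>
                        max (ereal (-b)) (ord_llr K (llr_vec lam \<omega> n) u - ereal d)))"

definition check_time_eq :: "nat \<Rightarrow> nat \<Rightarrow> real \<Rightarrow> real \<Rightarrow> (nat \<Rightarrow> nat \<Rightarrow> (nat \<Rightarrow> 'a) \<Rightarrow> real)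
                             \<Rightarrow> (nat \<Rightarrow> nat \<Rightarrow> 'a) \<Rightarrow> enat" where
  "check_time_eq K m c d lam \<omega> =
     hit_time (\<lambda>n. ord_llr K (llr_vec lam \<omega> n) m - ord_llr K (llr_vec lam \<omega> n) (m + 1)
                      \<ge> ereal (max c d))"

definition check_time_lt :: "nat \<Rightarrow> nat \<Rightarrow> nat \<Rightarrow> real \<Rightarrow> real \<Rightarrow> real \<Rightarrow> real
                             \<Rightarrow> (nat \<Rightarrow> nat \<Rightarrow> (nat \<Rightarrow> 'a) \<Rightarrow> real)
                             \<Rightarrow> (nat \<Rightarrow> nat \<Rightarrow> 'a) \<Rightarrow> enat" where
  "check_time_lt K l u a b c d lam \<omega> =
     min (min
       (hit_time (\<lambda>n. ord_llr K (llr_vec lam \<omega> n) (l + 1) \<le>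
                        min (ereal (-b)) (ereal (-c) + ord_llr K (llr_vec lam \<omega> n) l)))
       (hit_time (\<lambda>n. (\<forall>k\<in>{1..K}. lam k n (\<omega> k) \<notin> {-b<..<a}) \<and>
                        l \<le> num_pos K (llr_vec lam \<omega> n) \<and> num_pos K (llr_vec lam \<omega> n) \<le> u)))
       (hit_time (\<lambda>n. ord_llr K (llr_vec lam \<omega> n) u \<ge>
                        max (ereal a) (ereal d + ord_llr K (llr_vec lam \<omega> n) (u + 1))))"

definition min_over :: "(nat \<Rightarrow> real) \<Rightarrow> nat set \<Rightarrow> ereal" where
  "min_over f S = (if S = {} then \<infinity> else ereal (Min (f ` S)))"

text \<open>x \<lesssim> y along filter F: limsup x/y <= 1, i.e. for every eps > 0 eventually x <= (1+eps) y.\<close>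
definition asym_le :: "('x \<Rightarrow> ennreal) \<Rightarrow> ('x \<Rightarrow> ereal) \<Rightarrow> 'x filter \<Rightarrow> bool" where
  "asym_le f g F \<longleftrightarrow> (\<forall>\<epsilon>>0. eventually (\<lambda>x. enn2ereal (f x) \<le> ereal (1 + \<epsilon>) * g x) F)"

end

theory Submission
  imports Defs
begin


lemma filter_len_le:
  assumes "\<And>j. p \<le> j \<Longrightarrow> j < length ys \<Longrightarrow> \<not> P (ys ! j)"
  shows "length (filter P ys) \<le> p"
proof -
  have "filter P (drop p ys) = []"
    using assms by (auto simp: filter_empty_conv in_set_conv_nth)
  then have "filter P ys = filter P (take p ys)"
    by (metis append_Nil2 append_take_drop_id filter_append)
  also have "length \<dots> \<le> length (take p ys)" by (rule length_filter_le)
  also have "\<dots> \<le> p" by simp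
  finally show ?thesis .
qed

lemma filter_len_ge:
  assumes "p < length ys" "\<And>j. j \<le> p \<Longrightarrow> P (ys ! j)"
  shows "Suc p \<le> length (filter P ys)"
proof -
  have "filter P (take (Suc p) ys) = take (Suc p) ys"
    using assms by (auto simp: filter_id_conv in_set_conv_nth)
  then have "length (filter P (take (Suc p) ys)) = Suc p" using assms(1) by simp
  moreover have "length (filter P (take (Suc p) ys)) \<le> length (filter P ys)"
    by (metis append_take_drop_id filter_append length_append le_add1)
  ultimately show ?thesis by simp
qed

lemma count_ord_list:
  "length (filter P (rev (sort (map v [1..<Suc K])))) = card {k \<in> {1..K}. P (v k)}"
proof -
  have "length (filter P (rev (sort (map v [1..<Suc K])))) = size (filter_mset P (mset (rev (sort (map v [1..<Suc K])))))"
    by (metis mset_filter size_mset)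
  also have "\<dots> = size (filter_mset P (mset (map v [1..<Suc K])))" by simp
  also have "\<dots> = length (filter P (map v [1..<Suc K]))" by (metis mset_filter size_mset)
  also have "\<dots> = length (filter (P \<circ> v) [1..<Suc K])" by (simp add: filter_map)
  also have "\<dots> = card (set (filter (P \<circ> v) [1..<Suc K]))"
    by (rule distinct_card[symmetric]) simp
  also have "set (filter (P \<circ> v) [1..<Suc K]) = {k \<in> {1..K}. P (v k)}" by auto
  finally show ?thesis .
qed

lemma ord_desc:
  assumes "i \<le> j" "j < K"
  shows "rev (sort (map v [1..<Suc K])) ! j \<le> rev (sort (map v [1..<Suc K])) ! i"
proof -
  let ?s = "sort (map v [1..<Suc K])"
  have len: "length ?s = K" by simp
  have "?s ! (K - Suc j) \<le> ?s ! (K - Suc i)"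
    by (rule sorted_nth_mono) (use assms len in auto)
  then show ?thesis using assms by (simp add: rev_nth)
qed

lemma ord_ge:
  fixes v :: "nat \<Rightarrow> real"
  assumes S: "S \<subseteq> {1..K}" "card S = m" "1 \<le> m" and t: "\<And>k. k \<in> S \<Longrightarrow> v k \<ge> t"
  shows "ord_llr K v m \<ge> ereal t"
proof -
  let ?ys = "rev (sort (map v [1..<Suc K]))"
  have fin: "finite S" using S(1) finite_subset by blast
  have "card S \<le> card {1..K}" using S(1) by (rule card_mono[rotated]) simp
  then have mK: "m \<le> K" using S(2) by simp
  have "m \<le> card {k \<in> {1..K}. v k \<ge> t}"
  proof -
    have "S \<subseteq> {k \<in> {1..K}. t \<le> v k}" using S t by auto
    then have "card S \<le> card {k \<in> {1..K}. t \<le> v k}" by (rule card_mono[rotated]) simp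
    then show ?thesis using S(2) by simp
  qed
  also have "\<dots> = length (filter (\<lambda>x. x \<ge> t) ?ys)" by (rule count_ord_list[symmetric])
  finally have cnt: "m \<le> length (filter (\<lambda>x. x \<ge> t) ?ys)" .
  have "?ys ! (m - 1) \<ge> t"
  proof (rule ccontr)
    assume "\<not> ?ys ! (m - 1) \<ge> t"
    then have "length (filter (\<lambda>x. x \<ge> t) ?ys) \<le> m - 1"
    proof (intro filter_len_le)
      fix j assume j: "m - 1 \<le> j" "j < length ?ys"
      have len: "length ?ys = K" by (simp del: upt_Suc)
      have "?ys ! j \<le> ?ys ! (m-1)" by (rule ord_desc[of "m-1" j K v]) (use j len in auto)
      then show "\<not> t \<le> ?ys ! j" using \<open>\<not> ?ys ! (m - 1) \<ge> t\<close> by linarith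
    qed
    with cnt S(3) show False by linarith
  qed
  then show ?thesis unfolding ord_llr_def using S(3) mK by auto
qed

lemma ord_le:
  fixes v :: "nat \<Rightarrow> real"
  assumes S: "S \<subseteq> {1..K}" "card S = m" and t: "\<And>k. k \<in> {1..K} - S \<Longrightarrow> v k \<le> t"
  shows "ord_llr K v (m + 1) \<le> ereal t"
proof (cases "K < m + 1")
  case True then show ?thesis unfolding ord_llr_def by simp
next
  case False
  let ?ys = "rev (sort (map v [1..<Suc K]))"
  have fin: "finite S" using S(1) finite_subset by blast
  have "card {k \<in> {1..K}. v k > t} \<le> m"
  proof -
    have "{k \<in> {1..K}. v k > t} \<subseteq> S" using t by force
    then have "card {k \<in> {1..K}. v k > t} \<le> card S" using fin by (rule card_mono[rotated])
    then show ?thesis using S(2) by simp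
  qed
  then have cnt: "length (filter (\<lambda>x. x > t) ?ys) \<le> m" by (simp only: count_ord_list)
  have "?ys ! m \<le> t"
  proof (rule ccontr)
    assume "\<not> ?ys ! m \<le> t"
    then have "Suc m \<le> length (filter (\<lambda>x. x > t) ?ys)"
    proof (intro filter_len_ge)
      show "m < length ?ys" using False by (simp del: upt_Suc)
      fix j assume j: "j \<le> m"
      have "?ys ! m \<le> ?ys ! j" by (rule ord_desc[of j m K v]) (use j False in auto)
      then show "t < ?ys ! j" using \<open>\<not> ?ys ! m \<le> t\<close> by linarith
    qed
    with cnt show False by linarith
  qed
  then show ?thesis unfolding ord_llr_def using False by auto
qed

lemma num_pos_eq:
  fixes v :: "nat \<Rightarrow> real"
  assumes S: "S \<subseteq> {1..K}" and pos: "\<And>k. k \<in> S \<Longrightarrow> v k > 0" and neg: "\<And>k. k \<in> {1..K} - S \<Longrightarrow> v k < 0"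
  shows "num_pos K v = card S"
proof -
  have "{k \<in> {1..K}. v k > 0} = S" using S pos neg by fastforce
  then show ?thesis unfolding num_pos_def by simp
qed

lemma hit_time_le: "P n \<Longrightarrow> 1 \<le> n \<Longrightarrow> hit_time P \<le> enat n"
  unfolding hit_time_def by (auto intro: Least_le)



lemma neg_div_le_iff: "(-(x / real (Suc n)) \<le> c) = (-x \<le> c * real (Suc n))"
proof -
  have "-(x / real (Suc n)) = (-x) / real (Suc n)" by simp
  then show ?thesis by (simp only: pos_divide_le_eq of_nat_0_less_iff zero_less_Suc)
qed

locale setup_llr =
  fixes K :: nat
    and M :: "nat \<Rightarrow> 'a measure"
    and P0 P1 :: "nat \<Rightarrow> (nat \<Rightarrow> 'a) measure"
    and lam :: "nat \<Rightarrow> nat \<Rightarrow> (nat \<Rightarrow> 'a) \<Rightarrow> real"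
    and I J :: "nat \<Rightarrow> real"
    and A :: "nat set"
  assumes K_pos: "K \<ge> 1"
    and P0_prob: "\<And>k. k \<in> {1..K} \<Longrightarrow> prob_space (P0 k)"
    and P1_prob: "\<And>k. k \<in> {1..K} \<Longrightarrow> prob_space (P1 k)"
    and P0_sets: "\<And>k. k \<in> {1..K} \<Longrightarrow> sets (P0 k) = sets (path_space (M k))"
    and P1_sets: "\<And>k. k \<in> {1..K} \<Longrightarrow> sets (P1 k) = sets (path_space (M k))"
    and llr: "\<And>k. k \<in> {1..K} \<Longrightarrow> is_llr (M k) (P0 k) (P1 k) (lam k)"
    and I_pos: "\<And>k. k \<in> {1..K} \<Longrightarrow> I k > 0"
    and J_pos: "\<And>k. k \<in> {1..K} \<Longrightarrow> J k > 0"
    and I_compl: "\<And>k \<epsilon>. k \<in> {1..K} \<Longrightarrow> \<epsilon> > 0 \<Longrightarrow>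
        summable (\<lambda>n. measure (P1 k)
          {\<omega> \<in> space (P1 k). lam k (Suc n) \<omega> / real (Suc n) \<le> I k - \<epsilon>})"
    and J_compl: "\<And>k \<epsilon>. k \<in> {1..K} \<Longrightarrow> \<epsilon> > 0 \<Longrightarrow>
        summable (\<lambda>n. measure (P0 k)
          {\<omega> \<in> space (P0 k). - lam k (Suc n) \<omega> / real (Suc n) \<le> J k - \<epsilon>})"
    and A_sub: "A \<subseteq> {1..K}"
begin

definition Q :: "nat \<Rightarrow> (nat \<Rightarrow> 'a) measure" where
  "Q k = (if k \<in> A then P1 k else P0 k)"

abbreviation PA where "PA \<equiv> joint_law K P0 P1 A"

lemma PA_eq: "PA = PiM {1..K} Q"
  unfolding joint_law_def Q_def by simp

lemma Q_prob: "k \<in> {1..K} \<Longrightarrow> prob_space (Q k)"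
  unfolding Q_def using P0_prob P1_prob by auto

lemma Q_sets: "k \<in> {1..K} \<Longrightarrow> sets (Q k) = sets (path_space (M k))"
  unfolding Q_def using P0_sets P1_sets by auto

definition bad :: "real \<Rightarrow> nat \<Rightarrow> nat \<Rightarrow> (nat \<Rightarrow> 'a) \<Rightarrow> bool" where
  "bad \<delta> k n x = (if k \<in> A then lam k n x \<le> (I k - \<delta>) * real n else - lam k n x \<le> (J k - \<delta>) * real n)"

lemma lam_meas:
  assumes k: "k \<in> {1..K}" and n: "n \<ge> 1"
  shows "lam k n \<in> borel_measurable (Q k)"
proof -
  have "lam k n \<in> borel_measurable (obs_filtration (M k) n)"
    using llr[OF k] n unfolding is_llr_def by auto
  moreover have "subalgebra (path_space (M k)) (obs_filtration (M k) n)"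
    unfolding subalgebra_def obs_filtration_def
    apply (intro conjI)
     apply simp
    apply (rule sets_image_in_sets)
     apply simp
    unfolding path_space_def
    by (rule measurable_restrict_subset) simp
  ultimately have "lam k n \<in> borel_measurable (path_space (M k))"
    by (rule measurable_from_subalg[rotated])
  then show ?thesis using Q_sets[OF k] measurable_cong_sets by blast
qed

lemma bad_sets:
  assumes k: "k \<in> {1..K}" and n: "n \<ge> 1"
  shows "{x \<in> space (Q k). bad \<delta> k n x} \<in> sets (Q k)"
  using lam_meas[OF k n] unfolding bad_def by (cases "k \<in> A") auto

lemma bad_sets_PA:
  assumes k: "k \<in> {1..K}" and n: "n \<ge> 1"
  shows "{\<omega> \<in> space PA. bad \<delta> k n (\<omega> k)} \<in> sets PA"
  unfolding PA_eq
  by (rule measurable_sets_Collect[OF measurable_component_singleton[OF k]]) (rule bad_sets[OF k n])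

lemma bad_marginal:
  assumes k: "k \<in> {1..K}" and n: "n \<ge> 1"
  shows "emeasure PA {\<omega> \<in> space PA. bad \<delta> k n (\<omega> k)} = emeasure (Q k) {x \<in> space (Q k). bad \<delta> k n x}"
proof -
  have "emeasure (Q k) {x \<in> space (Q k). bad \<delta> k n x} =
        emeasure (distr (PiM {1..K} Q) (Q k) (\<lambda>\<omega>. \<omega> k)) {x \<in> space (Q k). bad \<delta> k n x}"
    using distr_PiM_component[of "{1..K}" Q k, OF Q_prob k] by simp
  also have "\<dots> = emeasure (PiM {1..K} Q) ((\<lambda>\<omega>. \<omega> k) -` {x \<in> space (Q k). bad \<delta> k n x} \<inter> space (PiM {1..K} Q))"
    by (rule emeasure_distr[OF measurable_component_singleton[of k "{1..K}" Q, OF k] bad_sets[OF k n]])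
  also have "(\<lambda>\<omega>. \<omega> k) -` {x \<in> space (Q k). bad \<delta> k n x} \<inter> space (PiM {1..K} Q) = {\<omega> \<in> space PA. bad \<delta> k n (\<omega> k)}"
    using k by (auto simp: PA_eq space_PiM)
  finally show ?thesis by (simp add: PA_eq)
qed

lemma bad_summable:
  assumes k: "k \<in> {1..K}" and d: "\<delta> > 0"
  shows "summable (\<lambda>n. measure (Q k) {x \<in> space (Q k). bad \<delta> k (Suc n) x})"
proof (cases "k \<in> A")
  case True
  have eq: "{x \<in> space (Q k). bad \<delta> k (Suc n) x} = {\<omega> \<in> space (P1 k). lam k (Suc n) \<omega> / real (Suc n) \<le> I k - \<delta>}" for n
    using True by (auto simp: Q_def bad_def pos_divide_le_eq simp del: of_nat_Suc)
  show ?thesis unfolding eq using I_compl[OF k d] True by (simp add: Q_def)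
next
  case False
  have eq: "{x \<in> space (Q k). bad \<delta> k (Suc n) x} = {\<omega> \<in> space (P0 k). - lam k (Suc n) \<omega> / real (Suc n) \<le> J k - \<delta>}" for n
    using False by (auto simp: Q_def bad_def neg_div_le_iff simp del: of_nat_Suc)
  show ?thesis unfolding eq using J_compl[OF k d] False by (simp add: Q_def)
qed

lemma PA_prob: "prob_space PA"
  unfolding PA_eq by (rule prob_space_PiM) (rule Q_prob)

lemma ennreal_nat_unbounded: "(\<And>t::nat. of_nat t \<le> (x::ennreal)) \<Longrightarrow> x = top"
proof (rule ccontr)
  assume H: "\<And>t::nat. of_nat t \<le> x" and "x \<noteq> top"
  then obtain r where r: "r \<ge> 0" "x = ennreal r" using less_top_ennreal top.not_eq_extremum by blast
  obtain t :: nat where "r < real t" using reals_Archimedean2 by blast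
  then show False using H[of t] r by (auto simp: ennreal_of_nat_eq_real_of_nat)
qed

lemma core:
  assumes d: "\<delta> > 0"
  shows "\<exists>C\<ge>0. \<forall>(T::(nat\<Rightarrow>nat\<Rightarrow>'a)\<Rightarrow>enat) n0.
     (\<forall>\<omega>\<in>space PA. \<forall>n. n0 \<le> n \<longrightarrow> 1 \<le> n \<longrightarrow> (\<forall>k\<in>{1..K}. \<not> bad \<delta> k n (\<omega> k)) \<longrightarrow> T \<omega> \<le> enat n)
     \<longrightarrow> expect_time PA T \<le> ennreal (real n0 + C)"
proof -
  define m where "m k n = measure (Q k) {x\<in>space (Q k). bad \<delta> k (Suc n) x}" for k n
  have msum: "summable (m k)" if "k \<in> {1..K}" for k
    unfolding m_def using bad_summable[OF that d] .
  have mnn: "m k n \<ge> 0" for k n unfolding m_def by simp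
  define C where "C = 1 + (\<Sum>k\<in>{1..K}. suminf (m k))"
  have C0: "C \<ge> 0" unfolding C_def using msum mnn
    by (smt (verit, ccfv_SIG) sum_nonneg suminf_nonneg)
  define f where "f n \<omega> = (\<Sum>k\<in>{1..K}. indicator {\<omega>\<in>space PA. bad \<delta> k (Suc n) (\<omega> k)} \<omega> :: ennreal)" for n \<omega>
  have fmeas: "f n \<in> borel_measurable PA" for n
    unfolding f_def by (intro borel_measurable_sum borel_measurable_indicator bad_sets_PA) auto
  have fint: "integral\<^sup>N PA (f n) = ennreal (\<Sum>k\<in>{1..K}. m k n)" for n
  proof -
    have "integral\<^sup>N PA (f n) = (\<Sum>k\<in>{1..K}. emeasure PA {\<omega>\<in>space PA. bad \<delta> k (Suc n) (\<omega> k)})"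
      unfolding f_def by (subst nn_integral_sum) (auto intro!: sum.cong nn_integral_indicator borel_measurable_indicator bad_sets_PA)
    also have "\<dots> = (\<Sum>k\<in>{1..K}. ennreal (m k n))"
    proof (rule sum.cong)
      fix k assume k: "k \<in> {1..K}"
      interpret Qk: prob_space "Q k" using Q_prob[OF k] .
      show "emeasure PA {\<omega>\<in>space PA. bad \<delta> k (Suc n) (\<omega> k)} = ennreal (m k n)"
        unfolding bad_marginal[OF k, of "Suc n", simplified] m_def by (simp add: Qk.emeasure_eq_measure)
    qed simp
    also have "\<dots> = ennreal (\<Sum>k\<in>{1..K}. m k n)" using mnn by simp
    finally show ?thesis .
  qed
  have total: "(\<Sum>n. integral\<^sup>N PA (f n)) = ennreal (C - 1)"
  proof -
    have "(\<Sum>n. integral\<^sup>N PA (f n)) = ennreal (\<Sum>n. \<Sum>k\<in>{1..K}. m k n)"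
      unfolding fint by (rule suminf_ennreal2) (auto intro!: sum_nonneg mnn summable_sum msum)
    also have "(\<Sum>n. \<Sum>k\<in>{1..K}. m k n) = C - 1"
      unfolding C_def by (subst suminf_sum) (auto intro: msum)
    finally show ?thesis .
  qed
  show ?thesis
  proof (intro exI[of _ C] conjI C0 allI impI)
    fix T :: "(nat\<Rightarrow>nat\<Rightarrow>'a)\<Rightarrow>enat" and n0 :: nat
    assume H: "\<forall>\<omega>\<in>space PA. \<forall>n. n0 \<le> n \<longrightarrow> 1 \<le> n \<longrightarrow> (\<forall>k\<in>{1..K}. \<not> bad \<delta> k n (\<omega> k)) \<longrightarrow> T \<omega> \<le> enat n"
    have pw: "ennreal_of_enat (T \<omega>) \<le> of_nat (n0+1) + (\<Sum>n. f n \<omega>)" if \<omega>: "\<omega> \<in> space PA" for \<omega>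
    proof -
      have key: "of_nat t \<le> of_nat (n0+1) + (\<Sum>n. f n \<omega>)" if tT: "enat t \<le> T \<omega>" for t
      proof -
        have f1: "1 \<le> f n \<omega>" if n: "n \<in> {n0..<t-1}" for n
        proof -
          have "enat (Suc n) < T \<omega>" using n tT by (metis atLeastLessThan_iff enat_ord_simps(2) less_diff_conv less_le_trans Suc_eq_plus1)
          then have "\<not> T \<omega> \<le> enat (Suc n)" by simp
          then obtain k where k: "k \<in> {1..K}" "bad \<delta> k (Suc n) (\<omega> k)"
          proof -
            have "n0 \<le> Suc n" using n by simp
            moreover have "1 \<le> Suc n" by simp
            ultimately have "\<not> (\<forall>k\<in>{1..K}. \<not> bad \<delta> k (Suc n) (\<omega> k))"
              using H \<omega> \<open>\<not> T \<omega> \<le> enat (Suc n)\<close> by blast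
            then show ?thesis using that by blast
          qed
          have "(1::ennreal) = indicator {\<omega>\<in>space PA. bad \<delta> k (Suc n) (\<omega> k)} \<omega>" using k \<omega> by simp
          also have "\<dots> \<le> f n \<omega>" unfolding f_def by (rule member_le_sum) (use k in auto)
          finally show ?thesis .
        qed
        have "of_nat (t - 1 - n0) = (\<Sum>n\<in>{n0..<t-1}. (1::ennreal))" by simp
        also have "\<dots> \<le> (\<Sum>n\<in>{n0..<t-1}. f n \<omega>)" by (rule sum_mono) (rule f1)
        also have "\<dots> \<le> (\<Sum>n. f n \<omega>)" by (rule sum_le_suminf) auto
        finally have "of_nat (t - 1 - n0) \<le> (\<Sum>n. f n \<omega>)" .
        then have "of_nat (n0 + 1) + of_nat (t - 1 - n0) \<le> of_nat (n0+1) + (\<Sum>n. f n \<omega>)"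
          by (rule add_left_mono)
        moreover have "(of_nat t :: ennreal) \<le> of_nat (n0 + 1) + of_nat (t - 1 - n0)"
          by (simp only: of_nat_add[symmetric] of_nat_le_iff)
        ultimately show ?thesis by (rule order_trans[rotated])
      qed
      show ?thesis
      proof (cases "T \<omega>")
        case (enat t) then show ?thesis using key[of t] by simp
      next
        case infinity
        then have "of_nat (n0+1) + (\<Sum>n. f n \<omega>) = top" by (intro ennreal_nat_unbounded key) simp
        then show ?thesis by simp
      qed
    qed
    interpret P: prob_space PA by (rule PA_prob)
    have "expect_time PA T \<le> (\<integral>\<^sup>+\<omega>. of_nat (n0+1) + (\<Sum>n. f n \<omega>) \<partial>PA)"
      unfolding expect_time_def by (rule nn_integral_mono) (rule pw)
    also have "\<dots> = (\<integral>\<^sup>+\<omega>. of_nat (n0+1) \<partial>PA) + (\<integral>\<^sup>+\<omega>. (\<Sum>n. f n \<omega>) \<partial>PA)"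
      by (rule nn_integral_add) (auto intro!: borel_measurable_suminf_order fmeas)
    also have "(\<integral>\<^sup>+\<omega>. (\<Sum>n. f n \<omega>) \<partial>PA) = (\<Sum>n. integral\<^sup>N PA (f n))"
      by (rule nn_integral_suminf) (rule fmeas)
    also have "(\<integral>\<^sup>+\<omega>. of_nat (n0+1) \<partial>PA) = of_nat (n0+1)"
      by (simp add: P.emeasure_space_1)
    finally have "expect_time PA T \<le> of_nat (n0+1) + ennreal (C - 1)" unfolding total .
    also have "of_nat (n0+1) + ennreal (C - 1) = ennreal (real n0 + C)"
    proof -
      have S0: "C - 1 \<ge> 0" unfolding C_def using msum mnn
        by (smt (verit, ccfv_SIG) sum_nonneg suminf_nonneg)
      have "of_nat (n0+1) + ennreal (C - 1) = ennreal (real (n0+1)) + ennreal (C - 1)"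
        by (simp add: ennreal_of_nat_eq_real_of_nat)
      also have "\<dots> = ennreal (real (n0+1) + (C - 1))" using S0 by (rule ennreal_plus[symmetric, OF of_nat_0_le_iff])
      finally show ?thesis by simp
    qed
    finally show "expect_time PA T \<le> ennreal (real n0 + C)" .
  qed
qed

end


lemma asym_le_cong: "asym_le f g F \<Longrightarrow> eventually (\<lambda>x. g x = g' x) F \<Longrightarrow> asym_le f g' F"
  unfolding asym_le_def
proof (intro allI impI)
  fix \<epsilon> :: real assume H: "\<forall>\<epsilon>>0. \<forall>\<^sub>F x in F. enn2ereal (f x) \<le> ereal (1 + \<epsilon>) * g x" and e: "\<epsilon> > 0"
    and ev: "eventually (\<lambda>x. g x = g' x) F"
  show "\<forall>\<^sub>F x in F. enn2ereal (f x) \<le> ereal (1 + \<epsilon>) * g' x"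
    using H[rule_format, OF e] ev by eventually_elim simp
qed

lemma asym_le_trans:
  assumes f: "asym_le f (\<lambda>x. ereal (g x)) F"
    and gg: "\<And>\<eta>. \<eta> > 0 \<Longrightarrow> eventually (\<lambda>x. g x \<le> (1+\<eta>) * g' x) F"
    and g0: "eventually (\<lambda>x. 0 \<le> g' x) F"
  shows "asym_le f (\<lambda>x. ereal (g' x)) F"
  unfolding asym_le_def
proof (intro allI impI)
  fix \<epsilon> :: real assume e: "\<epsilon> > 0"
  define \<eta> where "\<eta> = min \<epsilon> 1 / 3"
  have \<eta>: "\<eta> > 0" "\<eta> \<le> 1/3" "3 * \<eta> \<le> \<epsilon>" using e unfolding \<eta>_def by auto
  have "\<eta> * \<eta> \<le> \<eta> * 1" by (rule mult_left_mono) (use \<eta> in auto)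
  moreover have "(1+\<eta>) * (1+\<eta>) = 1 + 2*\<eta> + \<eta>*\<eta>" by (simp add: algebra_simps)
  ultimately have sq: "(1+\<eta>) * (1+\<eta>) \<le> 1 + \<epsilon>" using \<eta> by linarith
  show "\<forall>\<^sub>F x in F. enn2ereal (f x) \<le> ereal (1 + \<epsilon>) * ereal (g' x)"
    using f[unfolded asym_le_def, rule_format, OF \<eta>(1)] gg[OF \<eta>(1)] g0
  proof eventually_elim
    case (elim x)
    have "(1+\<eta>) * g x \<le> (1+\<eta>) * ((1+\<eta>) * g' x)" using elim(2) \<eta> by (intro mult_left_mono) auto
    also have "\<dots> = ((1+\<eta>) * (1+\<eta>)) * g' x" by simp
    also have "\<dots> \<le> (1+\<epsilon>) * g' x" using sq elim(3) by (intro mult_right_mono) auto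
    finally have "(1+\<eta>) * g x \<le> (1+\<epsilon>) * g' x" .
    then show ?case using elim(1) by (simp add: order_trans)
  qed
qed

lemma rate_bound:
  fixes m0 \<eta> R t :: real
  assumes m0: "m0 > 0" and \<eta>: "\<eta> > 0" and R: "m0 \<le> R" and t: "0 \<le> t"
  shows "R - 2 * (m0 * \<eta> / (2 * (1 + \<eta>))) > 0"
    and "t / (R - 2 * (m0 * \<eta> / (2 * (1 + \<eta>)))) \<le> (1 + \<eta>) * (t / R)"
proof -
  have eq: "2 * (m0 * \<eta> / (2 * (1 + \<eta>))) = m0 * \<eta> / (1 + \<eta>)" using \<eta> by (simp add: field_simps)
  have "m0 * \<eta> / (1 + \<eta>) \<le> R * \<eta> / (1 + \<eta>)" using R \<eta> by (intro divide_right_mono mult_right_mono) auto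
  then have lo: "R - 2 * (m0 * \<eta> / (2 * (1 + \<eta>))) \<ge> R / (1 + \<eta>)"
    unfolding eq using \<eta> by (simp add: field_simps)
  have Rp: "R / (1 + \<eta>) > 0" using R m0 \<eta> by auto
  then show "R - 2 * (m0 * \<eta> / (2 * (1 + \<eta>))) > 0" using lo by linarith
  have "t / (R - 2 * (m0 * \<eta> / (2 * (1 + \<eta>)))) \<le> t / (R / (1 + \<eta>))"
    by (rule divide_left_mono[OF lo t], rule mult_pos_pos) (use Rp lo in linarith)+
  also have "\<dots> = (1 + \<eta>) * (t / R)" by simp
  finally show "t / (R - 2 * (m0 * \<eta> / (2 * (1 + \<eta>)))) \<le> (1 + \<eta>) * (t / R)" .
qed

lemma thr: "0 < R \<Longrightarrow> t / R \<le> real n \<Longrightarrow> t \<le> R * real n"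
  by (simp add: pos_divide_le_eq mult.commute)

context setup_llr
begin

lemma framework:
  fixes T :: "'x \<Rightarrow> (nat\<Rightarrow>nat\<Rightarrow>'a) \<Rightarrow> enat" and g :: "'x \<Rightarrow> real" and F :: "'x filter"
  assumes det: "\<And>\<eta>. \<eta> > 0 \<Longrightarrow> \<exists>\<delta>>0. eventually (\<lambda>x. \<exists>r. r \<le> (1+\<eta>) * g x \<and>
      (\<forall>\<omega>\<in>space PA. \<forall>n. 1 \<le> n \<longrightarrow> r \<le> real n \<longrightarrow> (\<forall>k\<in>{1..K}. \<not> bad \<delta> k n (\<omega> k)) \<longrightarrow> T x \<omega> \<le> enat n)) F"
    and ginf: "\<And>Z. eventually (\<lambda>x. Z \<le> g x) F"
  shows "asym_le (\<lambda>x. expect_time PA (T x)) (\<lambda>x. ereal (g x)) F"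
  unfolding asym_le_def
proof (intro allI impI)
  fix \<epsilon> :: real assume e: "\<epsilon> > 0"
  define \<eta> where "\<eta> = \<epsilon> / 2"
  have \<eta>: "\<eta> > 0" using e by (simp add: \<eta>_def)
  obtain \<delta> where \<delta>: "\<delta> > 0" and ev: "eventually (\<lambda>x. \<exists>r. r \<le> (1+\<eta>) * g x \<and>
      (\<forall>\<omega>\<in>space PA. \<forall>n. 1 \<le> n \<longrightarrow> r \<le> real n \<longrightarrow> (\<forall>k\<in>{1..K}. \<not> bad \<delta> k n (\<omega> k)) \<longrightarrow> T x \<omega> \<le> enat n)) F"
    using det[OF \<eta>] by blast
  obtain C where C: "C \<ge> 0" and cr: "\<And>(T::(nat\<Rightarrow>nat\<Rightarrow>'a)\<Rightarrow>enat) n0.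
     (\<forall>\<omega>\<in>space PA. \<forall>n. n0 \<le> n \<longrightarrow> 1 \<le> n \<longrightarrow> (\<forall>k\<in>{1..K}. \<not> bad \<delta> k n (\<omega> k)) \<longrightarrow> T \<omega> \<le> enat n)
     \<Longrightarrow> expect_time PA T \<le> ennreal (real n0 + C)"
    using core[OF \<delta>] by blast
  have ev1: "eventually (\<lambda>x. (C + 1) / \<eta> \<le> g x) F" by (rule ginf)
  have ev0: "eventually (\<lambda>x. 0 \<le> g x) F" by (rule ginf)
  show "\<forall>\<^sub>F x in F. enn2ereal (expect_time PA (T x)) \<le> ereal (1 + \<epsilon>) * ereal (g x)"
    using ev ev1 ev0
  proof eventually_elim
    case (elim x)
    obtain r where r: "r \<le> (1+\<eta>) * g x" and rT: "\<forall>\<omega>\<in>space PA. \<forall>n. 1 \<le> n \<longrightarrow> r \<le> real n \<longrightarrow> (\<forall>k\<in>{1..K}. \<not> bad \<delta> k n (\<omega> k)) \<longrightarrow> T x \<omega> \<le> enat n"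
      using elim(1) by blast
    define n0 where "n0 = nat \<lceil>max r 0\<rceil>"
    have n0: "r \<le> real n0" "real n0 \<le> max r 0 + 1" unfolding n0_def by linarith+
    have hyp: "\<forall>\<omega>\<in>space PA. \<forall>n. n0 \<le> n \<longrightarrow> 1 \<le> n \<longrightarrow> (\<forall>k\<in>{1..K}. \<not> bad \<delta> k n (\<omega> k)) \<longrightarrow> T x \<omega> \<le> enat n"
    proof (intro ballI allI impI)
      fix \<omega> n assume "\<omega> \<in> space PA" "n0 \<le> n" "1 \<le> n" "\<forall>k\<in>{1..K}. \<not> bad \<delta> k n (\<omega> k)"
      moreover have "r \<le> real n" using n0(1) \<open>n0 \<le> n\<close> by (meson of_nat_le_iff order_trans)
      ultimately show "T x \<omega> \<le> enat n" using rT by blast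
    qed
    have E: "expect_time PA (T x) \<le> ennreal (real n0 + C)" by (rule cr[OF hyp])
    have "enn2ereal (expect_time PA (T x)) \<le> enn2ereal (ennreal (real n0 + C))"
      using E by (simp add: less_eq_ennreal.rep_eq)
    also have "\<dots> = ereal (real n0 + C)" by (rule enn2ereal_ennreal) (use C in simp)
    also have "real n0 + C \<le> (1 + \<epsilon>) * g x"
    proof -
      have "C + 1 \<le> \<eta> * g x" using elim(2) \<eta> by (simp add: pos_divide_le_eq mult.commute)
      moreover have "max r 0 \<le> (1+\<eta>) * g x" using r elim(3) \<eta> by simp
      ultimately have "real n0 + C \<le> (1+\<eta>) * g x + \<eta> * g x" using n0(2) by linarith
      also have "(1+\<eta>) * g x + \<eta> * g x = (1 + \<epsilon>) * g x" unfolding \<eta>_def by (simp add: algebra_simps)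
      finally show ?thesis .
    qed
    finally show ?case by simp
  qed
qed

end

lemma max_scale: "a1 \<le> c * b1 \<Longrightarrow> a2 \<le> c * b2 \<Longrightarrow> (0::real) \<le> c \<Longrightarrow> max a1 a2 \<le> c * max b1 b2"
  by (metis max.mono max_mult_distrib_left)
lemma min_scale: "a1 \<le> c * b1 \<Longrightarrow> a2 \<le> c * b2 \<Longrightarrow> (0::real) \<le> c \<Longrightarrow> min a1 a2 \<le> c * min b1 b2"
  by (metis min.mono min_mult_distrib_left)

lemma ev_ge: "filterlim f at_top F \<Longrightarrow> eventually (\<lambda>x. Z \<le> (f x::real)) F"
  unfolding filterlim_at_top by blast

lemma ev_div_ge:
  assumes f: "filterlim f at_top F" and R: "(R::real) > 0" shows "eventually (\<lambda>x. Z \<le> f x / R) F"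
proof -
  have "eventually (\<lambda>x. Z * R \<le> f x) F" by (rule ev_ge[OF f])
  then show ?thesis by eventually_elim (use R in \<open>simp add: pos_le_divide_eq\<close>)
qed

context setup_llr
begin

definition m0 where "m0 = min (Min (I ` {1..K})) (Min (J ` {1..K}))"
definition Imin where "Imin = Min (I ` A)"
definition Jmin where "Jmin = Min (J ` ({1..K} - A))"
definition dl where "dl \<eta> = m0 * \<eta> / (2 * (1 + \<eta>))"

lemma m0_pos: "m0 > 0"
proof -
  have "{1..K} \<noteq> {}" using K_pos by auto
  then have "Min (I ` {1..K}) > 0" "Min (J ` {1..K}) > 0" using I_pos J_pos by (subst Min_gr_iff; auto)+
  then show ?thesis unfolding m0_def by simp
qed

lemma I_ge: "k \<in> {1..K} \<Longrightarrow> m0 \<le> I k"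
  unfolding m0_def by (metis Min_le finite_atLeastAtMost finite_imageI image_eqI min.coboundedI1)
lemma J_ge: "k \<in> {1..K} \<Longrightarrow> m0 \<le> J k"
  unfolding m0_def by (metis Min_le finite_atLeastAtMost finite_imageI image_eqI min.coboundedI2)

lemma finA: "finite A" using A_sub finite_subset by blast

lemma Imin_le: "k \<in> A \<Longrightarrow> Imin \<le> I k"
  unfolding Imin_def using finA by simp
lemma Imin_ge: "A \<noteq> {} \<Longrightarrow> m0 \<le> Imin"
  unfolding Imin_def using finA A_sub I_ge by (subst Min_ge_iff) auto
lemma Jmin_le: "k \<in> {1..K} - A \<Longrightarrow> Jmin \<le> J k"
  unfolding Jmin_def by simp
lemma Jmin_ge: "{1..K} - A \<noteq> {} \<Longrightarrow> m0 \<le> Jmin"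
  unfolding Jmin_def using J_ge by (subst Min_ge_iff) auto

lemma min_over_I: "A \<noteq> {} \<Longrightarrow> min_over I A = ereal Imin"
  unfolding min_over_def Imin_def by simp
lemma min_over_J: "{1..K} - A \<noteq> {} \<Longrightarrow> min_over J ({1..K} - A) = ereal Jmin"
  unfolding min_over_def Jmin_def by simp

lemma dl_pos: "\<eta> > 0 \<Longrightarrow> dl \<eta> > 0"
  unfolding dl_def using m0_pos by simp

lemma rb1: "\<eta> > 0 \<Longrightarrow> m0 \<le> R \<Longrightarrow> R - 2 * dl \<eta> > 0"
  unfolding dl_def using rate_bound(1)[OF m0_pos] by blast
lemma rb2: "\<eta> > 0 \<Longrightarrow> m0 \<le> R \<Longrightarrow> 0 \<le> t \<Longrightarrow> t / (R - 2 * dl \<eta>) \<le> (1 + \<eta>) * (t / R)"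
  unfolding dl_def using rate_bound(2)[OF m0_pos] by blast

lemma thr2: "\<eta> > 0 \<Longrightarrow> m0 \<le> R \<Longrightarrow> t / (R - 2 * dl \<eta>) \<le> real n \<Longrightarrow> t \<le> (R - 2 * dl \<eta>) * real n"
  using thr rb1 by blast

context
  fixes \<delta> :: real and n :: nat and \<omega>
  assumes G: "\<forall>k\<in>{1..K}. \<not> bad \<delta> k n (\<omega> k)" and \<delta>0: "\<delta> \<ge> 0"
begin

lemma gA: "k \<in> A \<Longrightarrow> (I k - \<delta>) * real n \<le> lam k n (\<omega> k)"
proof -
  assume k: "k \<in> A"
  then have "\<not> bad \<delta> k n (\<omega> k)" using G A_sub by auto
  then show ?thesis using k unfolding bad_def by simp
qed

lemma gA2: "k \<in> A \<Longrightarrow> (I k - 2 * \<delta>) * real n \<le> lam k n (\<omega> k)"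
proof -
  assume k: "k \<in> A"
  have "(I k - 2 * \<delta>) * real n \<le> (I k - \<delta>) * real n" using \<delta>0 by (intro mult_right_mono) auto
  then show ?thesis using gA[OF k] by linarith
qed

lemma gAm: "k \<in> A \<Longrightarrow> (Imin - \<delta>) * real n \<le> lam k n (\<omega> k)"
proof -
  assume k: "k \<in> A"
  have "(Imin - \<delta>) * real n \<le> (I k - \<delta>) * real n" using Imin_le[OF k] by (intro mult_right_mono) auto
  then show ?thesis using gA[OF k] by linarith
qed

lemma gB: "k \<in> {1..K} - A \<Longrightarrow> lam k n (\<omega> k) \<le> - ((J k - \<delta>) * real n)"
proof -
  assume k: "k \<in> {1..K} - A"
  then have "\<not> bad \<delta> k n (\<omega> k)" using G by auto
  then show ?thesis using k unfolding bad_def by simp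
qed

lemma gB2: "k \<in> {1..K} - A \<Longrightarrow> lam k n (\<omega> k) \<le> - ((J k - 2 * \<delta>) * real n)"
proof -
  assume k: "k \<in> {1..K} - A"
  have "(J k - 2 * \<delta>) * real n \<le> (J k - \<delta>) * real n" using \<delta>0 by (intro mult_right_mono) auto
  then show ?thesis using gB[OF k] by linarith
qed

lemma gBm: "k \<in> {1..K} - A \<Longrightarrow> lam k n (\<omega> k) \<le> - ((Jmin - \<delta>) * real n)"
proof -
  assume k: "k \<in> {1..K} - A"
  have "(Jmin - \<delta>) * real n \<le> (J k - \<delta>) * real n" using Jmin_le[OF k] by (intro mult_right_mono) auto
  then show ?thesis using gB[OF k] by linarith
qed

lemma ordA: "A \<noteq> {} \<Longrightarrow> ereal ((Imin - \<delta>) * real n) \<le> ord_llr K (llr_vec lam \<omega> n) (card A)"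
  by (rule ord_ge[OF A_sub refl]) (auto simp: llr_vec_def gAm finA Suc_le_eq card_gt_0_iff)

lemma ordB: "ord_llr K (llr_vec lam \<omega> n) (card A + 1) \<le> ereal (- ((Jmin - \<delta>) * real n))"
  by (rule ord_le[OF A_sub refl]) (auto simp: llr_vec_def gBm)

end

lemma npos:
  assumes G: "\<forall>k\<in>{1..K}. \<not> bad (dl \<eta>) k n (\<omega> k)" and \<eta>: "\<eta> > 0" and n: "1 \<le> n"
  shows "num_pos K (llr_vec lam \<omega> n) = card A"
proof (rule num_pos_eq[OF A_sub])
  have d0: "dl \<eta> \<ge> 0" using dl_pos[OF \<eta>] by simp
  fix k
  show "k \<in> A \<Longrightarrow> 0 < llr_vec lam \<omega> n k"
  proof -
    assume k: "k \<in> A"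
    have "0 < (I k - 2 * dl \<eta>) * real n" using rb1[OF \<eta> I_ge] k A_sub n by auto
    then show ?thesis using gA2[OF G d0 k] unfolding llr_vec_def by linarith
  qed
  show "k \<in> {1..K} - A \<Longrightarrow> llr_vec lam \<omega> n k < 0"
  proof -
    assume k: "k \<in> {1..K} - A"
    have "0 < (J k - 2 * dl \<eta>) * real n" using rb1[OF \<eta> J_ge] k n by auto
    then show ?thesis using gB2[OF G d0 k] unfolding llr_vec_def by linarith
  qed
qed

lemma framework2:
  fixes T :: "'x \<Rightarrow> (nat\<Rightarrow>nat\<Rightarrow>'a) \<Rightarrow> enat" and g :: "'x \<Rightarrow> real" and F :: "'x filter"
  assumes det: "\<And>\<eta>. \<eta> > 0 \<Longrightarrow> eventually (\<lambda>x. \<exists>r. r \<le> (1+\<eta>) * g x \<and>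
      (\<forall>\<omega>\<in>space PA. \<forall>n. 1 \<le> n \<longrightarrow> r \<le> real n \<longrightarrow> (\<forall>k\<in>{1..K}. \<not> bad (dl \<eta>) k n (\<omega> k)) \<longrightarrow> T x \<omega> \<le> enat n)) F"
    and ginf: "\<And>Z. eventually (\<lambda>x. Z \<le> g x) F"
  shows "asym_le (\<lambda>x. expect_time PA (T x)) (\<lambda>x. ereal (g x)) F"
  by (rule framework) (use det dl_pos ginf in blast)+

lemma sprtA:
  assumes i: "i \<in> A" and fa: "filterlim fa at_top F"
  shows "asym_le (\<lambda>x. expect_time PA (sprt_time lam (fa x) (fb x) i)) (\<lambda>x. ereal (fa x / I i)) F"
proof (rule framework2)
  have iK: "i \<in> {1..K}" using A_sub i by auto
  fix \<eta> :: real assume \<eta>: "\<eta> > 0"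
  show "eventually (\<lambda>x. \<exists>r. r \<le> (1+\<eta>) * (fa x / I i) \<and>
      (\<forall>\<omega>\<in>space PA. \<forall>n. 1 \<le> n \<longrightarrow> r \<le> real n \<longrightarrow> (\<forall>k\<in>{1..K}. \<not> bad (dl \<eta>) k n (\<omega> k)) \<longrightarrow> sprt_time lam (fa x) (fb x) i \<omega> \<le> enat n)) F"
    using ev_ge[OF fa, of 0]
  proof eventually_elim
    case (elim x)
    show ?case
    proof (intro exI[of _ "fa x / (I i - 2 * dl \<eta>)"] conjI ballI allI impI)
      show "fa x / (I i - 2 * dl \<eta>) \<le> (1+\<eta>) * (fa x / I i)" by (rule rb2[OF \<eta> I_ge[OF iK] elim])
      fix \<omega> n assume n1: "1 \<le> n" and rn: "fa x / (I i - 2 * dl \<eta>) \<le> real n" and G: "\<forall>k\<in>{1..K}. \<not> bad (dl \<eta>) k n (\<omega> k)"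
      have "fa x \<le> (I i - 2 * dl \<eta>) * real n" by (rule thr2[OF \<eta> I_ge[OF iK] rn])
      also have "\<dots> \<le> lam i n (\<omega> i)" by (rule gA2[OF G _ i]) (use dl_pos[OF \<eta>] in simp)
      finally have "lam i n (\<omega> i) \<notin> {- fb x<..<fa x}" by simp
      then show "sprt_time lam (fa x) (fb x) i \<omega> \<le> enat n" unfolding sprt_time_def using n1 by (rule hit_time_le)
    qed
  qed
next
  fix Z show "eventually (\<lambda>x. Z \<le> fa x / I i) F" by (rule ev_div_ge[OF fa]) (use I_pos A_sub assms in auto)
qed

lemma sprtB:
  assumes j: "j \<in> {1..K} - A" and fb: "filterlim fb at_top F"
  shows "asym_le (\<lambda>x. expect_time PA (sprt_time lam (fa x) (fb x) j)) (\<lambda>x. ereal (fb x / J j)) F"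
proof (rule framework2)
  have jK: "j \<in> {1..K}" using j by auto
  fix \<eta> :: real assume \<eta>: "\<eta> > 0"
  show "eventually (\<lambda>x. \<exists>r. r \<le> (1+\<eta>) * (fb x / J j) \<and>
      (\<forall>\<omega>\<in>space PA. \<forall>n. 1 \<le> n \<longrightarrow> r \<le> real n \<longrightarrow> (\<forall>k\<in>{1..K}. \<not> bad (dl \<eta>) k n (\<omega> k)) \<longrightarrow> sprt_time lam (fa x) (fb x) j \<omega> \<le> enat n)) F"
    using ev_ge[OF fb, of 0]
  proof eventually_elim
    case (elim x)
    show ?case
    proof (intro exI[of _ "fb x / (J j - 2 * dl \<eta>)"] conjI ballI allI impI)
      show "fb x / (J j - 2 * dl \<eta>) \<le> (1+\<eta>) * (fb x / J j)" by (rule rb2[OF \<eta> J_ge[OF jK] elim])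
      fix \<omega> n assume n1: "1 \<le> n" and rn: "fb x / (J j - 2 * dl \<eta>) \<le> real n" and G: "\<forall>k\<in>{1..K}. \<not> bad (dl \<eta>) k n (\<omega> k)"
      have "fb x \<le> (J j - 2 * dl \<eta>) * real n" by (rule thr2[OF \<eta> J_ge[OF jK] rn])
      moreover have "lam j n (\<omega> j) \<le> - ((J j - 2 * dl \<eta>) * real n)" by (rule gB2[OF G _ j]) (use dl_pos[OF \<eta>] in simp)
      ultimately have "lam j n (\<omega> j) \<notin> {- fb x<..<fa x}" by simp
      then show "sprt_time lam (fa x) (fb x) j \<omega> \<le> enat n" unfolding sprt_time_def using n1 by (rule hit_time_le)
    qed
  qed
next
  fix Z show "eventually (\<lambda>x. Z \<le> fb x / J j) F" by (rule ev_div_ge[OF fb]) (use J_pos assms in auto)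
qed


lemma half: "0 \<le> (\<delta>::real) \<Longrightarrow> t \<le> (R - 2 * \<delta>) * real n \<Longrightarrow> t \<le> (R - \<delta>) * real n"
  by (smt (verit) mult_right_mono of_nat_0_le_iff)

lemma sumR: "(a + b - 2 * \<delta>) * (x::real) = (a - \<delta>) * x + (b - \<delta>) * x"
  by (simp add: algebra_simps)

lemma R_IJ: "i \<in> {1..K} \<Longrightarrow> {1..K} - A \<noteq> {} \<Longrightarrow> m0 \<le> I i + Jmin"
  using I_ge Jmin_ge m0_pos by fastforce
lemma R_JI: "j \<in> {1..K} \<Longrightarrow> A \<noteq> {} \<Longrightarrow> m0 \<le> J j + Imin"
  using J_ge Imin_ge m0_pos by fastforce
lemma R_II: "A \<noteq> {} \<Longrightarrow> {1..K} - A \<noteq> {} \<Longrightarrow> m0 \<le> Imin + Jmin"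
  using Imin_ge Jmin_ge m0_pos by fastforce

lemma hatEqA:
  assumes i: "i \<in> A" and Ac: "{1..K} - A \<noteq> {}" and fc: "filterlim fc at_top F"
  shows "asym_le (\<lambda>x. expect_time PA (hat_time_eq K (card A) (fc x) (fd x) lam i)) (\<lambda>x. ereal (fc x / (I i + Jmin))) F"
proof (rule framework2)
  have iK: "i \<in> {1..K}" using A_sub i by auto
  have R: "m0 \<le> I i + Jmin" by (rule R_IJ[OF iK Ac])
  fix \<eta> :: real assume \<eta>: "\<eta> > 0"
  have d0: "0 \<le> dl \<eta>" using dl_pos[OF \<eta>] by simp
  show "eventually (\<lambda>x. \<exists>r. r \<le> (1+\<eta>) * (fc x / (I i + Jmin)) \<and>
      (\<forall>\<omega>\<in>space PA. \<forall>n. 1 \<le> n \<longrightarrow> r \<le> real n \<longrightarrow> (\<forall>k\<in>{1..K}. \<not> bad (dl \<eta>) k n (\<omega> k)) \<longrightarrow> hat_time_eq K (card A) (fc x) (fd x) lam i \<omega> \<le> enat n)) F"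
    using ev_ge[OF fc, of 0]
  proof eventually_elim
    case (elim x)
    show ?case
    proof (intro exI[of _ "fc x / (I i + Jmin - 2 * dl \<eta>)"] conjI ballI allI impI)
      show "fc x / (I i + Jmin - 2 * dl \<eta>) \<le> (1+\<eta>) * (fc x / (I i + Jmin))" by (rule rb2[OF \<eta> R elim])
      fix \<omega> n assume n1: "1 \<le> n" and rn: "fc x / (I i + Jmin - 2 * dl \<eta>) \<le> real n" and G: "\<forall>k\<in>{1..K}. \<not> bad (dl \<eta>) k n (\<omega> k)"
      have c: "fc x \<le> (I i + Jmin - 2 * dl \<eta>) * real n" by (rule thr2[OF \<eta> R rn])
      have l1: "(I i - dl \<eta>) * real n \<le> lam i n (\<omega> i)" by (rule gA[OF G d0 i])
      have o: "ord_llr K (llr_vec lam \<omega> n) (card A + 1) \<le> ereal (- ((Jmin - dl \<eta>) * real n))" by (rule ordB[OF G d0])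
      have "ord_llr K (llr_vec lam \<omega> n) (card A + 1) + ereal (fc x) \<le> ereal (- ((Jmin - dl \<eta>) * real n)) + ereal (fc x)"
        by (rule add_right_mono[OF o])
      also have "\<dots> \<le> ereal (lam i n (\<omega> i))" using c l1 sumR[of "I i" Jmin "dl \<eta>" "real n"] by simp
      finally have P: "ord_llr K (llr_vec lam \<omega> n) (card A + 1) + ereal (fc x) \<le> ereal (lam i n (\<omega> i))" .
      have "hit_time (\<lambda>n. ereal (lam i n (\<omega> i)) \<ge> ord_llr K (llr_vec lam \<omega> n) (card A + 1) + ereal (fc x)) \<le> enat n"
        by (rule hit_time_le) (use P n1 in auto)
      then show "hat_time_eq K (card A) (fc x) (fd x) lam i \<omega> \<le> enat n" unfolding hat_time_eq_def by (rule min.coboundedI1)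
    qed
  qed
next
  have "I i + Jmin > 0" using R_IJ[OF _ Ac] A_sub i m0_pos by fastforce
  then show "eventually (\<lambda>x. Z \<le> fc x / (I i + Jmin)) F" for Z by (rule ev_div_ge[OF fc])
qed

lemma hatEqB:
  assumes j: "j \<in> {1..K} - A" and An: "A \<noteq> {}" and fd: "filterlim fd at_top F"
  shows "asym_le (\<lambda>x. expect_time PA (hat_time_eq K (card A) (fc x) (fd x) lam j)) (\<lambda>x. ereal (fd x / (J j + Imin))) F"
proof (rule framework2)
  have jK: "j \<in> {1..K}" using j by auto
  have R: "m0 \<le> J j + Imin" by (rule R_JI[OF jK An])
  fix \<eta> :: real assume \<eta>: "\<eta> > 0"
  have d0: "0 \<le> dl \<eta>" using dl_pos[OF \<eta>] by simp
  show "eventually (\<lambda>x. \<exists>r. r \<le> (1+\<eta>) * (fd x / (J j + Imin)) \<and>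
      (\<forall>\<omega>\<in>space PA. \<forall>n. 1 \<le> n \<longrightarrow> r \<le> real n \<longrightarrow> (\<forall>k\<in>{1..K}. \<not> bad (dl \<eta>) k n (\<omega> k)) \<longrightarrow> hat_time_eq K (card A) (fc x) (fd x) lam j \<omega> \<le> enat n)) F"
    using ev_ge[OF fd, of 0]
  proof eventually_elim
    case (elim x)
    show ?case
    proof (intro exI[of _ "fd x / (J j + Imin - 2 * dl \<eta>)"] conjI ballI allI impI)
      show "fd x / (J j + Imin - 2 * dl \<eta>) \<le> (1+\<eta>) * (fd x / (J j + Imin))" by (rule rb2[OF \<eta> R elim])
      fix \<omega> n assume n1: "1 \<le> n" and rn: "fd x / (J j + Imin - 2 * dl \<eta>) \<le> real n" and G: "\<forall>k\<in>{1..K}. \<not> bad (dl \<eta>) k n (\<omega> k)"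
      have c: "fd x \<le> (J j + Imin - 2 * dl \<eta>) * real n" by (rule thr2[OF \<eta> R rn])
      have l1: "lam j n (\<omega> j) \<le> - ((J j - dl \<eta>) * real n)" by (rule gB[OF G d0 j])
      have o: "ereal ((Imin - dl \<eta>) * real n) \<le> ord_llr K (llr_vec lam \<omega> n) (card A)" by (rule ordA[OF G d0 An])
      have "ereal (lam j n (\<omega> j)) \<le> ereal ((Imin - dl \<eta>) * real n) - ereal (fd x)"
        using c l1 sumR[of "J j" Imin "dl \<eta>" "real n"] by simp
      also have "\<dots> \<le> ord_llr K (llr_vec lam \<omega> n) (card A) - ereal (fd x)"
        by (rule ereal_minus_mono[OF o order_refl])
      finally have P: "ereal (lam j n (\<omega> j)) \<le> ord_llr K (llr_vec lam \<omega> n) (card A) - ereal (fd x)" .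
      have "hit_time (\<lambda>n. ereal (lam j n (\<omega> j)) \<le> ord_llr K (llr_vec lam \<omega> n) (card A) - ereal (fd x)) \<le> enat n"
        by (rule hit_time_le) (use P n1 in auto)
      then show "hat_time_eq K (card A) (fc x) (fd x) lam j \<omega> \<le> enat n" unfolding hat_time_eq_def by (rule min.coboundedI2)
    qed
  qed
next
  have "J j + Imin > 0" using R_JI[OF _ An] j m0_pos by fastforce
  then show "eventually (\<lambda>x. Z \<le> fd x / (J j + Imin)) F" for Z by (rule ev_div_ge[OF fd])
qed

lemma checkEq:
  assumes An: "A \<noteq> {}" and Ac: "{1..K} - A \<noteq> {}" and fc: "filterlim fc at_top F" and fd: "filterlim fd at_top F"
  shows "asym_le (\<lambda>x. expect_time PA (check_time_eq K (card A) (fc x) (fd x) lam)) (\<lambda>x. ereal (max (fc x) (fd x) / (Imin + Jmin))) F"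
proof (rule framework2)
  have R: "m0 \<le> Imin + Jmin" by (rule R_II[OF An Ac])
  fix \<eta> :: real assume \<eta>: "\<eta> > 0"
  have d0: "0 \<le> dl \<eta>" using dl_pos[OF \<eta>] by simp
  show "eventually (\<lambda>x. \<exists>r. r \<le> (1+\<eta>) * (max (fc x) (fd x) / (Imin + Jmin)) \<and>
      (\<forall>\<omega>\<in>space PA. \<forall>n. 1 \<le> n \<longrightarrow> r \<le> real n \<longrightarrow> (\<forall>k\<in>{1..K}. \<not> bad (dl \<eta>) k n (\<omega> k)) \<longrightarrow> check_time_eq K (card A) (fc x) (fd x) lam \<omega> \<le> enat n)) F"
    using ev_ge[OF fc, of 0]
  proof eventually_elim
    case (elim x)
    have m0': "0 \<le> max (fc x) (fd x)" using elim by simp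
    show ?case
    proof (intro exI[of _ "max (fc x) (fd x) / (Imin + Jmin - 2 * dl \<eta>)"] conjI ballI allI impI)
      show "max (fc x) (fd x) / (Imin + Jmin - 2 * dl \<eta>) \<le> (1+\<eta>) * (max (fc x) (fd x) / (Imin + Jmin))" by (rule rb2[OF \<eta> R m0'])
      fix \<omega> n assume n1: "1 \<le> n" and rn: "max (fc x) (fd x) / (Imin + Jmin - 2 * dl \<eta>) \<le> real n" and G: "\<forall>k\<in>{1..K}. \<not> bad (dl \<eta>) k n (\<omega> k)"
      have c: "max (fc x) (fd x) \<le> (Imin + Jmin - 2 * dl \<eta>) * real n" by (rule thr2[OF \<eta> R rn])
      have o1: "ereal ((Imin - dl \<eta>) * real n) \<le> ord_llr K (llr_vec lam \<omega> n) (card A)" by (rule ordA[OF G d0 An])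
      have o2: "ord_llr K (llr_vec lam \<omega> n) (card A + 1) \<le> ereal (- ((Jmin - dl \<eta>) * real n))" by (rule ordB[OF G d0])
      have "ereal (max (fc x) (fd x)) \<le> ereal ((Imin - dl \<eta>) * real n) - ereal (- ((Jmin - dl \<eta>) * real n))"
        using c sumR[of Imin Jmin "dl \<eta>" "real n"] by simp
      also have "\<dots> \<le> ord_llr K (llr_vec lam \<omega> n) (card A) - ord_llr K (llr_vec lam \<omega> n) (card A + 1)"
        by (rule ereal_minus_mono[OF o1 o2])
      finally have P: "ereal (max (fc x) (fd x)) \<le> ord_llr K (llr_vec lam \<omega> n) (card A) - ord_llr K (llr_vec lam \<omega> n) (card A + 1)" .
      show "check_time_eq K (card A) (fc x) (fd x) lam \<omega> \<le> enat n" unfolding check_time_eq_def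
        by (rule hit_time_le) (use P n1 in auto)
    qed
  qed
next
  have R0: "Imin + Jmin > 0" using R_II[OF An Ac] m0_pos by simp
  fix Z
  show "eventually (\<lambda>x. Z \<le> max (fc x) (fd x) / (Imin + Jmin)) F"
    using ev_div_ge[OF fc R0, of Z] by eventually_elim (use R0 in \<open>auto simp: divide_right_mono intro: order_trans\<close>)
qed


lemma hatLtA:
  assumes i: "i \<in> A" and fa: "filterlim fa at_top F"
  shows "asym_le (\<lambda>x. expect_time PA (hat_time_lt K l u (fa x) (fb x) (fc x) (fd x) lam i)) (\<lambda>x. ereal (fa x / I i)) F"
proof (rule framework2)
  have iK: "i \<in> {1..K}" using A_sub i by auto
  fix \<eta> :: real assume \<eta>: "\<eta> > 0"
  have d0: "0 \<le> dl \<eta>" using dl_pos[OF \<eta>] by simp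
  show "eventually (\<lambda>x. \<exists>r. r \<le> (1+\<eta>) * (fa x / I i) \<and>
      (\<forall>\<omega>\<in>space PA. \<forall>n. 1 \<le> n \<longrightarrow> r \<le> real n \<longrightarrow> (\<forall>k\<in>{1..K}. \<not> bad (dl \<eta>) k n (\<omega> k)) \<longrightarrow> hat_time_lt K l u (fa x) (fb x) (fc x) (fd x) lam i \<omega> \<le> enat n)) F"
    using ev_ge[OF fa, of 0]
  proof eventually_elim
    case (elim x)
    show ?case
    proof (intro exI[of _ "fa x / (I i - 2 * dl \<eta>)"] conjI ballI allI impI)
      show "fa x / (I i - 2 * dl \<eta>) \<le> (1+\<eta>) * (fa x / I i)" by (rule rb2[OF \<eta> I_ge[OF iK] elim])
      fix \<omega> n assume n1: "1 \<le> n" and rn: "fa x / (I i - 2 * dl \<eta>) \<le> real n" and G: "\<forall>k\<in>{1..K}. \<not> bad (dl \<eta>) k n (\<omega> k)"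
      have "fa x \<le> (I i - 2 * dl \<eta>) * real n" by (rule thr2[OF \<eta> I_ge[OF iK] rn])
      also have "\<dots> \<le> lam i n (\<omega> i)" by (rule gA2[OF G d0 i])
      finally have P: "min (ereal (fa x)) (ord_llr K (llr_vec lam \<omega> n) (l + 1) + ereal (fc x)) \<le> ereal (lam i n (\<omega> i))"
        by (simp add: min.coboundedI1)
      have "hit_time (\<lambda>n. ereal (lam i n (\<omega> i)) \<ge> min (ereal (fa x)) (ord_llr K (llr_vec lam \<omega> n) (l + 1) + ereal (fc x))) \<le> enat n"
        by (rule hit_time_le) (use P n1 in auto)
      then show "hat_time_lt K l u (fa x) (fb x) (fc x) (fd x) lam i \<omega> \<le> enat n" unfolding hat_time_lt_def by (rule min.coboundedI1)
    qed
  qed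
next
  fix Z show "eventually (\<lambda>x. Z \<le> fa x / I i) F" by (rule ev_div_ge[OF fa]) (use I_pos A_sub assms in auto)
qed

lemma hatLtA_l:
  assumes i: "i \<in> A" and l: "card A = l" and Ac: "{1..K} - A \<noteq> {}" and fa: "filterlim fa at_top F" and fc: "filterlim fc at_top F"
  shows "asym_le (\<lambda>x. expect_time PA (hat_time_lt K l u (fa x) (fb x) (fc x) (fd x) lam i))
     (\<lambda>x. ereal (min (fa x / I i) (fc x / (I i + Jmin)))) F"
proof (rule framework2)
  have iK: "i \<in> {1..K}" using A_sub i by auto
  have R: "m0 \<le> I i + Jmin" by (rule R_IJ[OF iK Ac])
  fix \<eta> :: real assume \<eta>: "\<eta> > 0"
  have d0: "0 \<le> dl \<eta>" using dl_pos[OF \<eta>] by simp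
  show "eventually (\<lambda>x. \<exists>r. r \<le> (1+\<eta>) * min (fa x / I i) (fc x / (I i + Jmin)) \<and>
      (\<forall>\<omega>\<in>space PA. \<forall>n. 1 \<le> n \<longrightarrow> r \<le> real n \<longrightarrow> (\<forall>k\<in>{1..K}. \<not> bad (dl \<eta>) k n (\<omega> k)) \<longrightarrow> hat_time_lt K l u (fa x) (fb x) (fc x) (fd x) lam i \<omega> \<le> enat n)) F"
    using ev_ge[OF fa, of 0] ev_ge[OF fc, of 0]
  proof eventually_elim
    case (elim x)
    show ?case
    proof (intro exI[of _ "min (fa x / (I i - 2 * dl \<eta>)) (fc x / (I i + Jmin - 2 * dl \<eta>))"] conjI ballI allI impI)
      show "min (fa x / (I i - 2 * dl \<eta>)) (fc x / (I i + Jmin - 2 * dl \<eta>)) \<le> (1+\<eta>) * min (fa x / I i) (fc x / (I i + Jmin))"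
        by (rule min_scale[OF rb2[OF \<eta> I_ge[OF iK] elim(1)] rb2[OF \<eta> R elim(2)]]) (use \<eta> in simp)
      fix \<omega> n assume n1: "1 \<le> n" and rn: "min (fa x / (I i - 2 * dl \<eta>)) (fc x / (I i + Jmin - 2 * dl \<eta>)) \<le> real n"
        and G: "\<forall>k\<in>{1..K}. \<not> bad (dl \<eta>) k n (\<omega> k)"
      have P: "min (ereal (fa x)) (ord_llr K (llr_vec lam \<omega> n) (l + 1) + ereal (fc x)) \<le> ereal (lam i n (\<omega> i))"
      proof (cases "fa x / (I i - 2 * dl \<eta>) \<le> real n")
        case True
        have "fa x \<le> (I i - 2 * dl \<eta>) * real n" by (rule thr2[OF \<eta> I_ge[OF iK] True])
        also have "\<dots> \<le> lam i n (\<omega> i)" by (rule gA2[OF G d0 i])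
        finally show ?thesis by (simp add: min.coboundedI1)
      next
        case False
        then have rn2: "fc x / (I i + Jmin - 2 * dl \<eta>) \<le> real n" using rn by linarith
        have c: "fc x \<le> (I i + Jmin - 2 * dl \<eta>) * real n" by (rule thr2[OF \<eta> R rn2])
        have l1: "(I i - dl \<eta>) * real n \<le> lam i n (\<omega> i)" by (rule gA[OF G d0 i])
        have o: "ord_llr K (llr_vec lam \<omega> n) (l + 1) \<le> ereal (- ((Jmin - dl \<eta>) * real n))" using ordB[OF G d0] l by simp
        have "ord_llr K (llr_vec lam \<omega> n) (l + 1) + ereal (fc x) \<le> ereal (- ((Jmin - dl \<eta>) * real n)) + ereal (fc x)"
          by (rule add_right_mono[OF o])
        also have "\<dots> \<le> ereal (lam i n (\<omega> i))" using c l1 sumR[of "I i" Jmin "dl \<eta>" "real n"] by simp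
        finally show ?thesis by (simp add: min.coboundedI2)
      qed
      have "hit_time (\<lambda>n. ereal (lam i n (\<omega> i)) \<ge> min (ereal (fa x)) (ord_llr K (llr_vec lam \<omega> n) (l + 1) + ereal (fc x))) \<le> enat n"
        by (rule hit_time_le) (use P n1 in auto)
      then show "hat_time_lt K l u (fa x) (fb x) (fc x) (fd x) lam i \<omega> \<le> enat n" unfolding hat_time_lt_def by (rule min.coboundedI1)
    qed
  qed
next
  have R0: "I i + Jmin > 0" using R_IJ[OF _ Ac] A_sub i m0_pos by fastforce
  have R1: "I i > 0" using I_pos A_sub i by auto
  fix Z show "eventually (\<lambda>x. Z \<le> min (fa x / I i) (fc x / (I i + Jmin))) F"
    using ev_div_ge[OF fa R1, of Z] ev_div_ge[OF fc R0, of Z] by eventually_elim simp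
qed

lemma hatLtB:
  assumes j: "j \<in> {1..K} - A" and fb: "filterlim fb at_top F"
  shows "asym_le (\<lambda>x. expect_time PA (hat_time_lt K l u (fa x) (fb x) (fc x) (fd x) lam j)) (\<lambda>x. ereal (fb x / J j)) F"
proof (rule framework2)
  have jK: "j \<in> {1..K}" using j by auto
  fix \<eta> :: real assume \<eta>: "\<eta> > 0"
  have d0: "0 \<le> dl \<eta>" using dl_pos[OF \<eta>] by simp
  show "eventually (\<lambda>x. \<exists>r. r \<le> (1+\<eta>) * (fb x / J j) \<and>
      (\<forall>\<omega>\<in>space PA. \<forall>n. 1 \<le> n \<longrightarrow> r \<le> real n \<longrightarrow> (\<forall>k\<in>{1..K}. \<not> bad (dl \<eta>) k n (\<omega> k)) \<longrightarrow> hat_time_lt K l u (fa x) (fb x) (fc x) (fd x) lam j \<omega> \<le> enat n)) F"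
    using ev_ge[OF fb, of 0]
  proof eventually_elim
    case (elim x)
    show ?case
    proof (intro exI[of _ "fb x / (J j - 2 * dl \<eta>)"] conjI ballI allI impI)
      show "fb x / (J j - 2 * dl \<eta>) \<le> (1+\<eta>) * (fb x / J j)" by (rule rb2[OF \<eta> J_ge[OF jK] elim])
      fix \<omega> n assume n1: "1 \<le> n" and rn: "fb x / (J j - 2 * dl \<eta>) \<le> real n" and G: "\<forall>k\<in>{1..K}. \<not> bad (dl \<eta>) k n (\<omega> k)"
      have "fb x \<le> (J j - 2 * dl \<eta>) * real n" by (rule thr2[OF \<eta> J_ge[OF jK] rn])
      moreover have "lam j n (\<omega> j) \<le> - ((J j - 2 * dl \<eta>) * real n)" by (rule gB2[OF G d0 j])
      ultimately have P: "ereal (lam j n (\<omega> j)) \<le> max (ereal (- fb x)) (ord_llr K (llr_vec lam \<omega> n) u - ereal (fd x))"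
        by (simp add: max.coboundedI1)
      have "hit_time (\<lambda>n. ereal (lam j n (\<omega> j)) \<le> max (ereal (- fb x)) (ord_llr K (llr_vec lam \<omega> n) u - ereal (fd x))) \<le> enat n"
        by (rule hit_time_le) (use P n1 in auto)
      then show "hat_time_lt K l u (fa x) (fb x) (fc x) (fd x) lam j \<omega> \<le> enat n" unfolding hat_time_lt_def by (rule min.coboundedI2)
    qed
  qed
next
  fix Z show "eventually (\<lambda>x. Z \<le> fb x / J j) F" by (rule ev_div_ge[OF fb]) (use J_pos assms in auto)
qed

lemma hatLtB_u:
  assumes j: "j \<in> {1..K} - A" and uu: "card A = u" and An: "A \<noteq> {}" and fb: "filterlim fb at_top F" and fd: "filterlim fd at_top F"
  shows "asym_le (\<lambda>x. expect_time PA (hat_time_lt K l u (fa x) (fb x) (fc x) (fd x) lam j))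
     (\<lambda>x. ereal (min (fb x / J j) (fd x / (J j + Imin)))) F"
proof (rule framework2)
  have jK: "j \<in> {1..K}" using j by auto
  have R: "m0 \<le> J j + Imin" by (rule R_JI[OF jK An])
  fix \<eta> :: real assume \<eta>: "\<eta> > 0"
  have d0: "0 \<le> dl \<eta>" using dl_pos[OF \<eta>] by simp
  show "eventually (\<lambda>x. \<exists>r. r \<le> (1+\<eta>) * min (fb x / J j) (fd x / (J j + Imin)) \<and>
      (\<forall>\<omega>\<in>space PA. \<forall>n. 1 \<le> n \<longrightarrow> r \<le> real n \<longrightarrow> (\<forall>k\<in>{1..K}. \<not> bad (dl \<eta>) k n (\<omega> k)) \<longrightarrow> hat_time_lt K l u (fa x) (fb x) (fc x) (fd x) lam j \<omega> \<le> enat n)) F"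
    using ev_ge[OF fb, of 0] ev_ge[OF fd, of 0]
  proof eventually_elim
    case (elim x)
    show ?case
    proof (intro exI[of _ "min (fb x / (J j - 2 * dl \<eta>)) (fd x / (J j + Imin - 2 * dl \<eta>))"] conjI ballI allI impI)
      show "min (fb x / (J j - 2 * dl \<eta>)) (fd x / (J j + Imin - 2 * dl \<eta>)) \<le> (1+\<eta>) * min (fb x / J j) (fd x / (J j + Imin))"
        by (rule min_scale[OF rb2[OF \<eta> J_ge[OF jK] elim(1)] rb2[OF \<eta> R elim(2)]]) (use \<eta> in simp)
      fix \<omega> n assume n1: "1 \<le> n" and rn: "min (fb x / (J j - 2 * dl \<eta>)) (fd x / (J j + Imin - 2 * dl \<eta>)) \<le> real n"
        and G: "\<forall>k\<in>{1..K}. \<not> bad (dl \<eta>) k n (\<omega> k)"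
      have P: "ereal (lam j n (\<omega> j)) \<le> max (ereal (- fb x)) (ord_llr K (llr_vec lam \<omega> n) u - ereal (fd x))"
      proof (cases "fb x / (J j - 2 * dl \<eta>) \<le> real n")
        case True
        have "fb x \<le> (J j - 2 * dl \<eta>) * real n" by (rule thr2[OF \<eta> J_ge[OF jK] True])
        moreover have "lam j n (\<omega> j) \<le> - ((J j - 2 * dl \<eta>) * real n)" by (rule gB2[OF G d0 j])
        ultimately show ?thesis by (simp add: max.coboundedI1)
      next
        case False
        then have rn2: "fd x / (J j + Imin - 2 * dl \<eta>) \<le> real n" using rn by linarith
        have c: "fd x \<le> (J j + Imin - 2 * dl \<eta>) * real n" by (rule thr2[OF \<eta> R rn2])
        have l1: "lam j n (\<omega> j) \<le> - ((J j - dl \<eta>) * real n)" by (rule gB[OF G d0 j])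
        have o: "ereal ((Imin - dl \<eta>) * real n) \<le> ord_llr K (llr_vec lam \<omega> n) u" using ordA[OF G d0 An] uu by simp
        have "ereal (lam j n (\<omega> j)) \<le> ereal ((Imin - dl \<eta>) * real n) - ereal (fd x)"
          using c l1 sumR[of "J j" Imin "dl \<eta>" "real n"] by simp
        also have "\<dots> \<le> ord_llr K (llr_vec lam \<omega> n) u - ereal (fd x)"
          by (rule ereal_minus_mono[OF o order_refl])
        finally show ?thesis by (simp add: max.coboundedI2)
      qed
      have "hit_time (\<lambda>n. ereal (lam j n (\<omega> j)) \<le> max (ereal (- fb x)) (ord_llr K (llr_vec lam \<omega> n) u - ereal (fd x))) \<le> enat n"
        by (rule hit_time_le) (use P n1 in auto)
      then show "hat_time_lt K l u (fa x) (fb x) (fc x) (fd x) lam j \<omega> \<le> enat n" unfolding hat_time_lt_def by (rule min.coboundedI2)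
    qed
  qed
next
  have R0: "J j + Imin > 0" using R_JI[OF _ An] j m0_pos by fastforce
  have R1: "J j > 0" using J_pos j by auto
  fix Z show "eventually (\<lambda>x. Z \<le> min (fb x / J j) (fd x / (J j + Imin))) F"
    using ev_div_ge[OF fb R1, of Z] ev_div_ge[OF fd R0, of Z] by eventually_elim simp
qed


lemma tau2:
  assumes G: "\<forall>k\<in>{1..K}. \<not> bad (dl \<eta>) k n (\<omega> k)" and \<eta>: "\<eta> > 0" and n1: "1 \<le> n"
    and lu: "l \<le> card A" "card A \<le> u"
    and ha: "A \<noteq> {} \<Longrightarrow> a \<le> (Imin - dl \<eta>) * real n"
    and hb: "{1..K} - A \<noteq> {} \<Longrightarrow> b \<le> (Jmin - dl \<eta>) * real n"
  shows "check_time_lt K l u a b c d lam \<omega> \<le> enat n"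
proof -
  have d0: "0 \<le> dl \<eta>" using dl_pos[OF \<eta>] by simp
  have all: "\<forall>k\<in>{1..K}. lam k n (\<omega> k) \<notin> {-b<..<a}"
  proof
    fix k assume k: "k \<in> {1..K}"
    show "lam k n (\<omega> k) \<notin> {-b<..<a}"
    proof (cases "k \<in> A")
      case True
      then have "a \<le> lam k n (\<omega> k)" using ha gAm[OF G d0 True] by fastforce
      then show ?thesis by simp
    next
      case False
      then have kc: "k \<in> {1..K} - A" using k by simp
      then have "lam k n (\<omega> k) \<le> - b" using hb gBm[OF G d0 kc] by fastforce
      then show ?thesis by simp
    qed
  qed
  have np: "num_pos K (llr_vec lam \<omega> n) = card A" by (rule npos[OF G \<eta> n1])
  have "hit_time (\<lambda>n. (\<forall>k\<in>{1..K}. lam k n (\<omega> k) \<notin> {-b<..<a}) \<and>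
                        l \<le> num_pos K (llr_vec lam \<omega> n) \<and> num_pos K (llr_vec lam \<omega> n) \<le> u) \<le> enat n"
    by (rule hit_time_le) (use all np lu n1 in auto)
  then show ?thesis unfolding check_time_lt_def by (meson min.coboundedI1 min.coboundedI2)
qed

lemma tau1:
  assumes G: "\<forall>k\<in>{1..K}. \<not> bad \<delta> k n (\<omega> k)" and d0: "0 \<le> \<delta>" and n1: "1 \<le> n"
    and cl: "card A = l" and An: "A \<noteq> {}"
    and hb: "b \<le> (Jmin - \<delta>) * real n" and hc: "c \<le> (Imin + Jmin - 2 * \<delta>) * real n"
  shows "check_time_lt K l u a b c d lam \<omega> \<le> enat n"
proof -
  have o1: "ereal ((Imin - \<delta>) * real n) \<le> ord_llr K (llr_vec lam \<omega> n) l" using ordA[OF G d0 An] cl by simp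
  have o2: "ord_llr K (llr_vec lam \<omega> n) (l + 1) \<le> ereal (- ((Jmin - \<delta>) * real n))" using ordB[OF G d0] cl by simp
  have "ereal (- ((Jmin - \<delta>) * real n)) \<le> ereal (- c) + ereal ((Imin - \<delta>) * real n)"
    using hc sumR[of Imin Jmin \<delta> "real n"] by simp
  also have "\<dots> \<le> ereal (- c) + ord_llr K (llr_vec lam \<omega> n) l" by (rule add_left_mono[OF o1])
  finally have "ord_llr K (llr_vec lam \<omega> n) (l + 1) \<le> ereal (- c) + ord_llr K (llr_vec lam \<omega> n) l"
    using o2 by (rule order_trans[rotated])
  moreover have "ord_llr K (llr_vec lam \<omega> n) (l + 1) \<le> ereal (- b)" using o2 hb by (simp add: order_trans)
  ultimately have P: "ord_llr K (llr_vec lam \<omega> n) (l + 1) \<le> min (ereal (-b)) (ereal (-c) + ord_llr K (llr_vec lam \<omega> n) l)"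
    by simp
  have "hit_time (\<lambda>n. ord_llr K (llr_vec lam \<omega> n) (l + 1) \<le>
                        min (ereal (-b)) (ereal (-c) + ord_llr K (llr_vec lam \<omega> n) l)) \<le> enat n"
    by (rule hit_time_le) (use P n1 in auto)
  then show ?thesis unfolding check_time_lt_def by (meson min.coboundedI1)
qed

lemma tau3:
  assumes G: "\<forall>k\<in>{1..K}. \<not> bad \<delta> k n (\<omega> k)" and d0: "0 \<le> \<delta>" and n1: "1 \<le> n"
    and cu: "card A = u" and An: "A \<noteq> {}"
    and ha: "a \<le> (Imin - \<delta>) * real n" and hd: "d \<le> (Imin + Jmin - 2 * \<delta>) * real n"
  shows "check_time_lt K l u a b c d lam \<omega> \<le> enat n"
proof -
  have o1: "ereal ((Imin - \<delta>) * real n) \<le> ord_llr K (llr_vec lam \<omega> n) u" using ordA[OF G d0 An] cu by simp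
  have o2: "ord_llr K (llr_vec lam \<omega> n) (u + 1) \<le> ereal (- ((Jmin - \<delta>) * real n))" using ordB[OF G d0] cu by simp
  have "ereal d + ord_llr K (llr_vec lam \<omega> n) (u + 1) \<le> ereal d + ereal (- ((Jmin - \<delta>) * real n))"
    by (rule add_left_mono[OF o2])
  also have "\<dots> \<le> ereal ((Imin - \<delta>) * real n)" using hd sumR[of Imin Jmin \<delta> "real n"] by simp
  finally have "ereal d + ord_llr K (llr_vec lam \<omega> n) (u + 1) \<le> ord_llr K (llr_vec lam \<omega> n) u"
    using o1 by (rule order_trans)
  moreover have "ereal a \<le> ord_llr K (llr_vec lam \<omega> n) u"
  proof -
    have "ereal a \<le> ereal ((Imin - \<delta>) * real n)" using ha by simp
    then show ?thesis using o1 by (rule order_trans)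
  qed
  ultimately have P: "max (ereal a) (ereal d + ord_llr K (llr_vec lam \<omega> n) (u + 1)) \<le> ord_llr K (llr_vec lam \<omega> n) u"
    by simp
  have "hit_time (\<lambda>n. ord_llr K (llr_vec lam \<omega> n) u \<ge>
                        max (ereal a) (ereal d + ord_llr K (llr_vec lam \<omega> n) (u + 1))) \<le> enat n"
    by (rule hit_time_le) (use P n1 in auto)
  then show ?thesis unfolding check_time_lt_def by (meson min.coboundedI2)
qed


lemma checkLt_l0:
  assumes cl: "card A = l" and lu: "card A \<le> u" and A0: "A = {}" and fb: "filterlim fb at_top F"
  shows "asym_le (\<lambda>x. expect_time PA (check_time_lt K l u (fa x) (fb x) (fc x) (fd x) lam)) (\<lambda>x. ereal (fb x / Jmin)) F"
proof (rule framework2)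
  fix \<eta> :: real assume \<eta>: "\<eta> > 0"
  have d0: "0 \<le> dl \<eta>" using dl_pos[OF \<eta>] by simp
  show "eventually (\<lambda>x. \<exists>r. r \<le> (1+\<eta>) * (fb x / Jmin) \<and>
      (\<forall>\<omega>\<in>space PA. \<forall>n. 1 \<le> n \<longrightarrow> r \<le> real n \<longrightarrow> (\<forall>k\<in>{1..K}. \<not> bad (dl \<eta>) k n (\<omega> k)) \<longrightarrow> check_time_lt K l u (fa x) (fb x) (fc x) (fd x) lam \<omega> \<le> enat n)) F"
    using ev_ge[OF fb, of 0]
  proof eventually_elim
    case (elim x)
    have Ac: "{1..K} - A \<noteq> {}" using A0 K_pos by auto
    have R: "m0 \<le> Jmin" by (rule Jmin_ge[OF Ac])
    show ?case
    proof (intro exI[of _ "fb x / (Jmin - 2 * dl \<eta>)"] conjI ballI allI impI)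
      show "fb x / (Jmin - 2 * dl \<eta>) \<le> (1+\<eta>) * (fb x / Jmin)" by (rule rb2[OF \<eta> R elim])
      fix \<omega> n assume n1: "1 \<le> n" and rn: "fb x / (Jmin - 2 * dl \<eta>) \<le> real n" and G: "\<forall>k\<in>{1..K}. \<not> bad (dl \<eta>) k n (\<omega> k)"
      have "fb x \<le> (Jmin - dl \<eta>) * real n" by (rule half[OF d0 thr2[OF \<eta> R rn]])
      then show "check_time_lt K l u (fa x) (fb x) (fc x) (fd x) lam \<omega> \<le> enat n"
        by (intro tau2[OF G \<eta> n1]) (use cl lu A0 in auto)
    qed
  qed
next
  have Ac: "{1..K} - A \<noteq> {}" using A0 K_pos by auto
  have "Jmin > 0" using Jmin_ge[OF Ac] m0_pos by simp
  then show "eventually (\<lambda>x. Z \<le> fb x / Jmin) F" for Z by (rule ev_div_ge[OF fb])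
qed

lemma checkLt_l:
  assumes cl: "card A = l" and lu: "card A \<le> u" and An: "A \<noteq> {}" and Ac: "{1..K} - A \<noteq> {}"
    and fa: "filterlim fa at_top F" and fb: "filterlim fb at_top F" and fc: "filterlim fc at_top F"
  shows "asym_le (\<lambda>x. expect_time PA (check_time_lt K l u (fa x) (fb x) (fc x) (fd x) lam)) (\<lambda>x. ereal (max (fb x / Jmin) (min (fa x / Imin) (fc x / (Imin + Jmin))))) F"
proof (rule framework2)
  fix \<eta> :: real assume \<eta>: "\<eta> > 0"
  have d0: "0 \<le> dl \<eta>" using dl_pos[OF \<eta>] by simp
  show "eventually (\<lambda>x. \<exists>r. r \<le> (1+\<eta>) * (max (fb x / Jmin) (min (fa x / Imin) (fc x / (Imin + Jmin)))) \<and>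
      (\<forall>\<omega>\<in>space PA. \<forall>n. 1 \<le> n \<longrightarrow> r \<le> real n \<longrightarrow> (\<forall>k\<in>{1..K}. \<not> bad (dl \<eta>) k n (\<omega> k)) \<longrightarrow> check_time_lt K l u (fa x) (fb x) (fc x) (fd x) lam \<omega> \<le> enat n)) F"
    using ev_ge[OF fa, of 0] ev_ge[OF fb, of 0] ev_ge[OF fc, of 0]
  proof eventually_elim
    case (elim x)
    have RI: "m0 \<le> Imin" by (rule Imin_ge[OF An])
    have RJ: "m0 \<le> Jmin" by (rule Jmin_ge[OF Ac])
    have R: "m0 \<le> Imin + Jmin" by (rule R_II[OF An Ac])
    show ?case
    proof (intro exI[of _ "max (fb x / (Jmin - 2 * dl \<eta>)) (min (fa x / (Imin - 2 * dl \<eta>)) (fc x / (Imin + Jmin - 2 * dl \<eta>)))"] conjI ballI allI impI)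
      show "max (fb x / (Jmin - 2 * dl \<eta>)) (min (fa x / (Imin - 2 * dl \<eta>)) (fc x / (Imin + Jmin - 2 * dl \<eta>)))
         \<le> (1+\<eta>) * max (fb x / Jmin) (min (fa x / Imin) (fc x / (Imin + Jmin)))"
        by (rule max_scale[OF rb2[OF \<eta> RJ elim(2)] min_scale[OF rb2[OF \<eta> RI elim(1)] rb2[OF \<eta> R elim(3)]]]) (use \<eta> in simp)+
      fix \<omega> n assume n1: "1 \<le> n" and rn: "max (fb x / (Jmin - 2 * dl \<eta>)) (min (fa x / (Imin - 2 * dl \<eta>)) (fc x / (Imin + Jmin - 2 * dl \<eta>))) \<le> real n"
        and G: "\<forall>k\<in>{1..K}. \<not> bad (dl \<eta>) k n (\<omega> k)"
      have rb: "fb x / (Jmin - 2 * dl \<eta>) \<le> real n" using rn by simp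
      have hb: "fb x \<le> (Jmin - dl \<eta>) * real n" by (rule half[OF d0 thr2[OF \<eta> RJ rb]])
      show "check_time_lt K l u (fa x) (fb x) (fc x) (fd x) lam \<omega> \<le> enat n"
      proof (cases "fa x / (Imin - 2 * dl \<eta>) \<le> real n")
        case True
        have "fa x \<le> (Imin - dl \<eta>) * real n" by (rule half[OF d0 thr2[OF \<eta> RI True]])
        then show ?thesis by (intro tau2[OF G \<eta> n1]) (use cl lu hb in auto)
      next
        case False
        then have "fc x / (Imin + Jmin - 2 * dl \<eta>) \<le> real n" using rn by (simp add: min_le_iff_disj)
        then have "fc x \<le> (Imin + Jmin - 2 * dl \<eta>) * real n" by (rule thr2[OF \<eta> R])
        then show ?thesis by (intro tau1[OF G d0 n1 cl An hb])
      qed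
    qed
  qed
next
  have R0: "Jmin > 0" using Jmin_ge[OF Ac] m0_pos by simp
  show "eventually (\<lambda>x. Z \<le> max (fb x / Jmin) (min (fa x / Imin) (fc x / (Imin + Jmin)))) F" for Z
    using ev_div_ge[OF fb R0, of Z] by eventually_elim (rule max.coboundedI1)
qed

lemma checkLt_mid:
  assumes lu: "l \<le> card A" "card A \<le> u" and An: "A \<noteq> {}" and Ac: "{1..K} - A \<noteq> {}"
    and fa: "filterlim fa at_top F" and fb: "filterlim fb at_top F"
  shows "asym_le (\<lambda>x. expect_time PA (check_time_lt K l u (fa x) (fb x) (fc x) (fd x) lam)) (\<lambda>x. ereal (max (fa x / Imin) (fb x / Jmin))) F"
proof (rule framework2)
  fix \<eta> :: real assume \<eta>: "\<eta> > 0"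
  have d0: "0 \<le> dl \<eta>" using dl_pos[OF \<eta>] by simp
  show "eventually (\<lambda>x. \<exists>r. r \<le> (1+\<eta>) * (max (fa x / Imin) (fb x / Jmin)) \<and>
      (\<forall>\<omega>\<in>space PA. \<forall>n. 1 \<le> n \<longrightarrow> r \<le> real n \<longrightarrow> (\<forall>k\<in>{1..K}. \<not> bad (dl \<eta>) k n (\<omega> k)) \<longrightarrow> check_time_lt K l u (fa x) (fb x) (fc x) (fd x) lam \<omega> \<le> enat n)) F"
    using ev_ge[OF fa, of 0] ev_ge[OF fb, of 0]
  proof eventually_elim
    case (elim x)
    have RI: "m0 \<le> Imin" by (rule Imin_ge[OF An])
    have RJ: "m0 \<le> Jmin" by (rule Jmin_ge[OF Ac])
    show ?case
    proof (intro exI[of _ "max (fa x / (Imin - 2 * dl \<eta>)) (fb x / (Jmin - 2 * dl \<eta>))"] conjI ballI allI impI)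
      show "max (fa x / (Imin - 2 * dl \<eta>)) (fb x / (Jmin - 2 * dl \<eta>)) \<le> (1+\<eta>) * max (fa x / Imin) (fb x / Jmin)"
        by (rule max_scale[OF rb2[OF \<eta> RI elim(1)] rb2[OF \<eta> RJ elim(2)]]) (use \<eta> in simp)
      fix \<omega> n assume n1: "1 \<le> n" and rn: "max (fa x / (Imin - 2 * dl \<eta>)) (fb x / (Jmin - 2 * dl \<eta>)) \<le> real n"
        and G: "\<forall>k\<in>{1..K}. \<not> bad (dl \<eta>) k n (\<omega> k)"
      have ra: "fa x / (Imin - 2 * dl \<eta>) \<le> real n" and rb: "fb x / (Jmin - 2 * dl \<eta>) \<le> real n" using rn by simp_all
      have hb: "fb x \<le> (Jmin - dl \<eta>) * real n" by (rule half[OF d0 thr2[OF \<eta> RJ rb]])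
      have ha: "fa x \<le> (Imin - dl \<eta>) * real n" by (rule half[OF d0 thr2[OF \<eta> RI ra]])
      show "check_time_lt K l u (fa x) (fb x) (fc x) (fd x) lam \<omega> \<le> enat n"
        by (intro tau2[OF G \<eta> n1]) (use lu ha hb in auto)
    qed
  qed
next
  have R0: "Jmin > 0" using Jmin_ge[OF Ac] m0_pos by simp
  show "eventually (\<lambda>x. Z \<le> max (fa x / Imin) (fb x / Jmin)) F" for Z
    using ev_div_ge[OF fb R0, of Z] by eventually_elim (rule max.coboundedI2)
qed

lemma checkLt_all:
  assumes lu: "l \<le> card A" "card A \<le> u" and An: "A \<noteq> {}" and Ac: "{1..K} - A = {}"
    and fa: "filterlim fa at_top F"
  shows "asym_le (\<lambda>x. expect_time PA (check_time_lt K l u (fa x) (fb x) (fc x) (fd x) lam)) (\<lambda>x. ereal (fa x / Imin)) F"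
proof (rule framework2)
  fix \<eta> :: real assume \<eta>: "\<eta> > 0"
  have d0: "0 \<le> dl \<eta>" using dl_pos[OF \<eta>] by simp
  show "eventually (\<lambda>x. \<exists>r. r \<le> (1+\<eta>) * (fa x / Imin) \<and>
      (\<forall>\<omega>\<in>space PA. \<forall>n. 1 \<le> n \<longrightarrow> r \<le> real n \<longrightarrow> (\<forall>k\<in>{1..K}. \<not> bad (dl \<eta>) k n (\<omega> k)) \<longrightarrow> check_time_lt K l u (fa x) (fb x) (fc x) (fd x) lam \<omega> \<le> enat n)) F"
    using ev_ge[OF fa, of 0]
  proof eventually_elim
    case (elim x)
    have RI: "m0 \<le> Imin" by (rule Imin_ge[OF An])
    show ?case
    proof (intro exI[of _ "fa x / (Imin - 2 * dl \<eta>)"] conjI ballI allI impI)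
      show "fa x / (Imin - 2 * dl \<eta>) \<le> (1+\<eta>) * (fa x / Imin)" by (rule rb2[OF \<eta> RI elim])
      fix \<omega> n assume n1: "1 \<le> n" and rn: "fa x / (Imin - 2 * dl \<eta>) \<le> real n"
        and G: "\<forall>k\<in>{1..K}. \<not> bad (dl \<eta>) k n (\<omega> k)"
      have ha: "fa x \<le> (Imin - dl \<eta>) * real n" by (rule half[OF d0 thr2[OF \<eta> RI rn]])
      show "check_time_lt K l u (fa x) (fb x) (fc x) (fd x) lam \<omega> \<le> enat n"
        by (intro tau2[OF G \<eta> n1]) (use lu ha Ac in auto)
    qed
  qed
next
  have "Imin > 0" using Imin_ge[OF An] m0_pos by simp
  then show "eventually (\<lambda>x. Z \<le> fa x / Imin) F" for Z by (rule ev_div_ge[OF fa])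
qed

lemma checkLt_u:
  assumes cu: "card A = u" and lu: "l \<le> card A" and An: "A \<noteq> {}" and Ac: "{1..K} - A \<noteq> {}"
    and fa: "filterlim fa at_top F" and fb: "filterlim fb at_top F" and fd: "filterlim fd at_top F"
  shows "asym_le (\<lambda>x. expect_time PA (check_time_lt K l u (fa x) (fb x) (fc x) (fd x) lam)) (\<lambda>x. ereal (max (fa x / Imin) (min (fb x / Jmin) (fd x / (Jmin + Imin))))) F"
proof (rule framework2)
  fix \<eta> :: real assume \<eta>: "\<eta> > 0"
  have d0: "0 \<le> dl \<eta>" using dl_pos[OF \<eta>] by simp
  show "eventually (\<lambda>x. \<exists>r. r \<le> (1+\<eta>) * (max (fa x / Imin) (min (fb x / Jmin) (fd x / (Jmin + Imin)))) \<and>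
      (\<forall>\<omega>\<in>space PA. \<forall>n. 1 \<le> n \<longrightarrow> r \<le> real n \<longrightarrow> (\<forall>k\<in>{1..K}. \<not> bad (dl \<eta>) k n (\<omega> k)) \<longrightarrow> check_time_lt K l u (fa x) (fb x) (fc x) (fd x) lam \<omega> \<le> enat n)) F"
    using ev_ge[OF fa, of 0] ev_ge[OF fb, of 0] ev_ge[OF fd, of 0]
  proof eventually_elim
    case (elim x)
    have RI: "m0 \<le> Imin" by (rule Imin_ge[OF An])
    have RJ: "m0 \<le> Jmin" by (rule Jmin_ge[OF Ac])
    have R: "m0 \<le> Jmin + Imin" using R_II[OF An Ac] by (simp add: add.commute)
    show ?case
    proof (intro exI[of _ "max (fa x / (Imin - 2 * dl \<eta>)) (min (fb x / (Jmin - 2 * dl \<eta>)) (fd x / (Jmin + Imin - 2 * dl \<eta>)))"] conjI ballI allI impI)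
      show "max (fa x / (Imin - 2 * dl \<eta>)) (min (fb x / (Jmin - 2 * dl \<eta>)) (fd x / (Jmin + Imin - 2 * dl \<eta>)))
         \<le> (1+\<eta>) * max (fa x / Imin) (min (fb x / Jmin) (fd x / (Jmin + Imin)))"
        by (rule max_scale[OF rb2[OF \<eta> RI elim(1)] min_scale[OF rb2[OF \<eta> RJ elim(2)] rb2[OF \<eta> R elim(3)]]]) (use \<eta> in simp)+
      fix \<omega> n assume n1: "1 \<le> n" and rn: "max (fa x / (Imin - 2 * dl \<eta>)) (min (fb x / (Jmin - 2 * dl \<eta>)) (fd x / (Jmin + Imin - 2 * dl \<eta>))) \<le> real n"
        and G: "\<forall>k\<in>{1..K}. \<not> bad (dl \<eta>) k n (\<omega> k)"
      have ra: "fa x / (Imin - 2 * dl \<eta>) \<le> real n" using rn by simp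
      have ha: "fa x \<le> (Imin - dl \<eta>) * real n" by (rule half[OF d0 thr2[OF \<eta> RI ra]])
      show "check_time_lt K l u (fa x) (fb x) (fc x) (fd x) lam \<omega> \<le> enat n"
      proof (cases "fb x / (Jmin - 2 * dl \<eta>) \<le> real n")
        case True
        have "fb x \<le> (Jmin - dl \<eta>) * real n" by (rule half[OF d0 thr2[OF \<eta> RJ True]])
        then show ?thesis by (intro tau2[OF G \<eta> n1]) (use cu lu ha in auto)
      next
        case False
        then have "fd x / (Jmin + Imin - 2 * dl \<eta>) \<le> real n" using rn by (simp add: min_le_iff_disj)
        then have "fd x \<le> (Jmin + Imin - 2 * dl \<eta>) * real n" by (rule thr2[OF \<eta> R])
        then have "fd x \<le> (Imin + Jmin - 2 * dl \<eta>) * real n" by (simp add: add.commute)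
        then show ?thesis by (intro tau3[OF G d0 n1 cu An ha])
      qed
    qed
  qed
next
  have R0: "Imin > 0" using Imin_ge[OF An] m0_pos by simp
  show "eventually (\<lambda>x. Z \<le> max (fa x / Imin) (min (fb x / Jmin) (fd x / (Jmin + Imin)))) F" for Z
    using ev_div_ge[OF fa R0, of Z] by eventually_elim (rule max.coboundedI1)
qed

end


lemma filterlim_fst_snd: "filterlim (\<lambda>x. fst (snd x)) at_top (F1 \<times>\<^sub>F (at_top \<times>\<^sub>F G))"
  by (rule filterlim_compose[OF filterlim_fst filterlim_snd])
lemma filterlim_fst_snd_snd: "filterlim (\<lambda>x. fst (snd (snd x))) at_top (F1 \<times>\<^sub>F (F2 \<times>\<^sub>F (at_top \<times>\<^sub>F G)))"
  by (rule filterlim_compose[OF filterlim_fst_snd filterlim_snd])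
lemma filterlim_snd_snd_snd: "filterlim (\<lambda>x. snd (snd (snd x))) at_top (F1 \<times>\<^sub>F (F2 \<times>\<^sub>F (F3 \<times>\<^sub>F at_top)))"
  by (rule filterlim_compose[OF filterlim_snd filterlim_compose[OF filterlim_snd filterlim_snd]])

lemma asym_le_eq: "asym_le f g F \<Longrightarrow> (\<And>x. f x = f' x) \<Longrightarrow> (\<And>x. g x = g' x) \<Longrightarrow> asym_le f' g' F"
proof -
  assume "asym_le f g F" "\<And>x. f x = f' x" "\<And>x. g x = g' x"
  then show ?thesis unfolding asym_le_def by (metis (no_types, lifting) eventually_mono)
qed


lemma ratio_ev:
  fixes f g :: "'x \<Rightarrow> real"
  assumes lim: "((\<lambda>x. f x / g x) \<longlongrightarrow> 1) F" and g: "filterlim g at_top F" and \<eta>: "\<eta> > 0"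
  shows "eventually (\<lambda>x. g x \<le> (1+\<eta>) * f x) F"
proof -
  have "1 / (1+\<eta>) < (1::real)" using \<eta> by simp
  then have e1: "eventually (\<lambda>x. 1 / (1+\<eta>) < f x / g x) F" using order_tendstoD(1)[OF lim] by blast
  have e2: "eventually (\<lambda>x. 1 \<le> g x) F" using g unfolding filterlim_at_top by blast
  show ?thesis using e1 e2
  proof eventually_elim
    case (elim x)
    then have gp: "g x > 0" by simp
    have "1 / (1+\<eta>) * g x < f x" using elim(1) gp by (simp add: less_divide_eq)
    then have "g x < (1+\<eta>) * f x" using \<eta> by (simp add: field_simps)
    then show ?case by simp
  qed
qed

lemma scale_div: "(0::real) < R \<Longrightarrow> c \<le> (1+\<eta>) * a \<Longrightarrow> c / R \<le> (1+\<eta>) * (a / R)"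
  by (metis divide_right_mono less_le times_divide_eq_right)

lemma self_scale: "(0::real) \<le> t \<Longrightarrow> 0 \<le> \<eta> \<Longrightarrow> t \<le> (1+\<eta>) * t"
  by (simp add: algebra_simps)

context setup_llr
begin

lemma final_sprtA:
  "\<forall>i\<in>A. asym_le (\<lambda>(a, b). expect_time PA (sprt_time lam a b i)) (\<lambda>(a, b). ereal a / ereal (I i)) (at_top \<times>\<^sub>F at_top)"
proof
  fix i assume i: "i \<in> A"
  have "I i > 0" using I_pos A_sub i by auto
  have "asym_le (\<lambda>x. expect_time PA (sprt_time lam (fst x) (snd x) i)) (\<lambda>x. ereal (fst x / I i)) (at_top \<times>\<^sub>F at_top)"
    by (rule sprtA[OF i filterlim_fst])
  then show "asym_le (\<lambda>(a, b). expect_time PA (sprt_time lam a b i)) (\<lambda>(a, b). ereal a / ereal (I i)) (at_top \<times>\<^sub>F at_top)"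
    by (rule asym_le_eq) (use \<open>I i > 0\<close> in \<open>auto split: prod.splits\<close>)
qed

lemma final_sprtB:
  "\<forall>j\<in>{1..K} - A. asym_le (\<lambda>(a, b). expect_time PA (sprt_time lam a b j)) (\<lambda>(a, b). ereal b / ereal (J j)) (at_top \<times>\<^sub>F at_top)"
proof
  fix j assume j: "j \<in> {1..K} - A"
  have "J j > 0" using J_pos j by auto
  have "asym_le (\<lambda>x. expect_time PA (sprt_time lam (fst x) (snd x) j)) (\<lambda>x. ereal (snd x / J j)) (at_top \<times>\<^sub>F at_top)"
    by (rule sprtB[OF j filterlim_snd])
  then show "asym_le (\<lambda>(a, b). expect_time PA (sprt_time lam a b j)) (\<lambda>(a, b). ereal b / ereal (J j)) (at_top \<times>\<^sub>F at_top)"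
    by (rule asym_le_eq) (use \<open>J j > 0\<close> in \<open>auto split: prod.splits\<close>)
qed

lemma Ac_ne: "card A < K \<Longrightarrow> {1..K} - A \<noteq> {}"
  using A_sub by (metis Diff_eq_empty_iff card_atLeastAtMost diff_Suc_1 nat_less_le subset_antisym)

lemma Imin_pos: "A \<noteq> {} \<Longrightarrow> Imin > 0" using Imin_ge m0_pos by fastforce
lemma Jmin_pos: "{1..K} - A \<noteq> {} \<Longrightarrow> Jmin > 0" using Jmin_ge m0_pos by fastforce

lemma final_eq:
  assumes cond: "l \<le> u \<and> u \<le> K \<and> 0 < u \<and> l < K \<and> l \<le> card A \<and> card A \<le> u" and lu: "l = u"
  shows "(\<forall>i\<in>A. asym_le
            (\<lambda>(c, d). expect_time (joint_law K P0 P1 A) (hat_time_eq K l c d lam i))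
            (\<lambda>(c, d). ereal c / (ereal (I i) + min_over J ({1..K} - A)))
            (at_top \<times>\<^sub>F at_top)) \<and>
         (\<forall>j\<in>{1..K} - A. asym_le
            (\<lambda>(c, d). expect_time (joint_law K P0 P1 A) (hat_time_eq K l c d lam j))
            (\<lambda>(c, d). ereal d / (ereal (J j) + min_over I A))
            (at_top \<times>\<^sub>F at_top)) \<and>
         asym_le
            (\<lambda>(c, d). expect_time (joint_law K P0 P1 A) (check_time_eq K l c d lam))
            (\<lambda>(c, d). ereal (max c d) / (min_over I A + min_over J ({1..K} - A)))
            (at_top \<times>\<^sub>F at_top)"
proof -
  have cl: "card A = l" using cond lu by auto
  have An: "A \<noteq> {}" using cond lu cl by auto
  have Ac: "{1..K} - A \<noteq> {}" using cond cl Ac_ne by auto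
  have I0: "Imin > 0" by (rule Imin_pos[OF An])
  have J0: "Jmin > 0" by (rule Jmin_pos[OF Ac])
  note MJ = min_over_J[OF Ac] min_over_J[OF Ac, simplified]
  show ?thesis
  proof (intro conjI ballI)
    fix i assume i: "i \<in> A"
    have "I i > 0" using I_pos A_sub i by auto
    have "asym_le (\<lambda>x. expect_time PA (hat_time_eq K (card A) (fst x) (snd x) lam i)) (\<lambda>x. ereal (fst x / (I i + Jmin))) (at_top \<times>\<^sub>F at_top)"
      by (rule hatEqA[OF i Ac filterlim_fst])
    then show "asym_le (\<lambda>(c, d). expect_time (joint_law K P0 P1 A) (hat_time_eq K l c d lam i))
            (\<lambda>(c, d). ereal c / (ereal (I i) + min_over J ({1..K} - A))) (at_top \<times>\<^sub>F at_top)"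
      by (rule asym_le_eq) (use \<open>I i > 0\<close> J0 cl in \<open>auto split: prod.splits simp: MJ\<close>)
  next
    fix j assume j: "j \<in> {1..K} - A"
    have "J j > 0" using J_pos j by auto
    have "asym_le (\<lambda>x. expect_time PA (hat_time_eq K (card A) (fst x) (snd x) lam j)) (\<lambda>x. ereal (snd x / (J j + Imin))) (at_top \<times>\<^sub>F at_top)"
      by (rule hatEqB[OF j An filterlim_snd])
    then show "asym_le (\<lambda>(c, d). expect_time (joint_law K P0 P1 A) (hat_time_eq K l c d lam j))
            (\<lambda>(c, d). ereal d / (ereal (J j) + min_over I A)) (at_top \<times>\<^sub>F at_top)"
      by (rule asym_le_eq) (use \<open>J j > 0\<close> I0 cl in \<open>auto split: prod.splits simp: min_over_I[OF An]\<close>)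
  next
    have "asym_le (\<lambda>x. expect_time PA (check_time_eq K (card A) (fst x) (snd x) lam)) (\<lambda>x. ereal (max (fst x) (snd x) / (Imin + Jmin))) (at_top \<times>\<^sub>F at_top)"
      by (rule checkEq[OF An Ac filterlim_fst filterlim_snd])
    then show "asym_le (\<lambda>(c, d). expect_time (joint_law K P0 P1 A) (check_time_eq K l c d lam))
            (\<lambda>(c, d). ereal (max c d) / (min_over I A + min_over J ({1..K} - A))) (at_top \<times>\<^sub>F at_top)"
      by (rule asym_le_eq) (use I0 J0 cl in \<open>auto split: prod.splits simp: min_over_I[OF An] MJ simp del: ereal_max\<close>)
  qed
qed


lemma final_lt:
  assumes cond: "l \<le> u \<and> u \<le> K \<and> 0 < u \<and> l < K \<and> l \<le> card A \<and> card A \<le> u" and lu: "l < u"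
  shows "(\<forall>i\<in>A. asym_le
            (\<lambda>(a, b, c, d). expect_time (joint_law K P0 P1 A) (hat_time_lt K l u a b c d lam i))
            (\<lambda>(a, b, c, d). if card A = l
                then min (ereal a / ereal (I i)) (ereal c / (ereal (I i) + min_over J ({1..K} - A)))
                else ereal a / ereal (I i))
            (at_top \<times>\<^sub>F (at_top \<times>\<^sub>F (at_top \<times>\<^sub>F at_top)))) \<and>
         (\<forall>j\<in>{1..K} - A. asym_le
            (\<lambda>(a, b, c, d). expect_time (joint_law K P0 P1 A) (hat_time_lt K l u a b c d lam j))
            (\<lambda>(a, b, c, d). if card A = u
                then min (ereal b / ereal (J j)) (ereal d / (ereal (J j) + min_over I A))
                else ereal b / ereal (J j))
            (at_top \<times>\<^sub>F (at_top \<times>\<^sub>F (at_top \<times>\<^sub>F at_top)))) \<and>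
         asym_le
            (\<lambda>(a, b, c, d). expect_time (joint_law K P0 P1 A) (check_time_lt K l u a b c d lam))
            (\<lambda>(a, b, c, d).
               if card A = l then
                 max (ereal b / min_over J ({1..K} - A))
                     (min (ereal a / min_over I A)
                          (ereal c / (min_over I A + min_over J ({1..K} - A))))
               else if card A < u then
                 max (ereal a / min_over I A) (ereal b / min_over J ({1..K} - A))
               else
                 max (ereal a / min_over I A)
                     (min (ereal b / min_over J ({1..K} - A))
                          (ereal d / (min_over J ({1..K} - A) + min_over I A))))
            (at_top \<times>\<^sub>F (at_top \<times>\<^sub>F (at_top \<times>\<^sub>F at_top)))"
proof -
  let ?F = "at_top \<times>\<^sub>F (at_top \<times>\<^sub>F (at_top \<times>\<^sub>F at_top)) :: (real \<times> real \<times> real \<times> real) filter"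
  have fa: "filterlim (\<lambda>x. fst x) at_top ?F" by (rule filterlim_fst)
  have fb: "filterlim (\<lambda>x. fst (snd x)) at_top ?F" by (rule filterlim_fst_snd)
  have fc: "filterlim (\<lambda>x. fst (snd (snd x))) at_top ?F" by (rule filterlim_fst_snd_snd)
  have fd: "filterlim (\<lambda>x. snd (snd (snd x))) at_top ?F" by (rule filterlim_snd_snd_snd)
  have uK: "u \<le> K" and u0: "0 < u" and lA: "l \<le> card A" and Au: "card A \<le> u" using cond by auto
  show ?thesis
  proof (intro conjI ballI)
    fix i assume i: "i \<in> A"
    have Ii: "I i > 0" using I_pos A_sub i by auto
    show "asym_le
            (\<lambda>(a, b, c, d). expect_time (joint_law K P0 P1 A) (hat_time_lt K l u a b c d lam i))
            (\<lambda>(a, b, c, d). if card A = l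
                then min (ereal a / ereal (I i)) (ereal c / (ereal (I i) + min_over J ({1..K} - A)))
                else ereal a / ereal (I i)) ?F"
    proof (cases "card A = l")
      case True
      have Ac: "{1..K} - A \<noteq> {}" using True lu uK Ac_ne by auto
      note MJ = min_over_J[OF Ac] min_over_J[OF Ac, simplified]
      have J0: "Jmin > 0" by (rule Jmin_pos[OF Ac])
      have "asym_le (\<lambda>x. expect_time PA (hat_time_lt K l u (fst x) (fst (snd x)) (fst (snd (snd x))) (snd (snd (snd x))) lam i))
         (\<lambda>x. ereal (min (fst x / I i) (fst (snd (snd x)) / (I i + Jmin)))) ?F"
        by (rule hatLtA_l[OF i True Ac fa fc])
      then show ?thesis
        by (rule asym_le_eq) (use True Ii J0 in \<open>auto split: prod.splits simp: MJ\<close>)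
    next
      case False
      have "asym_le (\<lambda>x. expect_time PA (hat_time_lt K l u (fst x) (fst (snd x)) (fst (snd (snd x))) (snd (snd (snd x))) lam i))
         (\<lambda>x. ereal (fst x / I i)) ?F"
        by (rule hatLtA[OF i fa])
      then show ?thesis
        by (rule asym_le_eq) (use False Ii in \<open>auto split: prod.splits\<close>)
    qed
  next
    fix j assume j: "j \<in> {1..K} - A"
    have Jj: "J j > 0" using J_pos j by auto
    show "asym_le
            (\<lambda>(a, b, c, d). expect_time (joint_law K P0 P1 A) (hat_time_lt K l u a b c d lam j))
            (\<lambda>(a, b, c, d). if card A = u
                then min (ereal b / ereal (J j)) (ereal d / (ereal (J j) + min_over I A))
                else ereal b / ereal (J j)) ?F"
    proof (cases "card A = u")
      case True
      have An: "A \<noteq> {}" using True u0 by auto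
      have I0: "Imin > 0" by (rule Imin_pos[OF An])
      have "asym_le (\<lambda>x. expect_time PA (hat_time_lt K l u (fst x) (fst (snd x)) (fst (snd (snd x))) (snd (snd (snd x))) lam j))
         (\<lambda>x. ereal (min (fst (snd x) / J j) (snd (snd (snd x)) / (J j + Imin)))) ?F"
        by (rule hatLtB_u[OF j True An fb fd])
      then show ?thesis
        by (rule asym_le_eq) (use True Jj I0 in \<open>auto split: prod.splits simp: min_over_I[OF An]\<close>)
    next
      case False
      have "asym_le (\<lambda>x. expect_time PA (hat_time_lt K l u (fst x) (fst (snd x)) (fst (snd (snd x))) (snd (snd (snd x))) lam j))
         (\<lambda>x. ereal (fst (snd x) / J j)) ?F"
        by (rule hatLtB[OF j fb])
      then show ?thesis
        by (rule asym_le_eq) (use False Jj in \<open>auto split: prod.splits\<close>)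
    qed
  next
    let ?T = "\<lambda>x. expect_time PA (check_time_lt K l u (fst x) (fst (snd x)) (fst (snd (snd x))) (snd (snd (snd x))) lam)"
    let ?G = "\<lambda>(a::real, b::real, c::real, d::real).
               if card A = l then
                 max (ereal b / min_over J ({1..K} - A))
                     (min (ereal a / min_over I A)
                          (ereal c / (min_over I A + min_over J ({1..K} - A))))
               else if card A < u then
                 max (ereal a / min_over I A) (ereal b / min_over J ({1..K} - A))
               else
                 max (ereal a / min_over I A)
                     (min (ereal b / min_over J ({1..K} - A))
                          (ereal d / (min_over J ({1..K} - A) + min_over I A)))"
    have Tq: "(\<lambda>(a, b, c, d). expect_time (joint_law K P0 P1 A) (check_time_lt K l u a b c d lam)) = ?T"
      by (auto split: prod.splits)
    have main: "asym_le ?T ?G ?F"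
    proof (cases "card A = l")
      case cl: True
      show ?thesis
      proof (cases "A = {}")
        case A0: True
        have Ac: "{1..K} - A \<noteq> {}" using A0 K_pos by auto
        note MJ = min_over_J[OF Ac] min_over_J[OF Ac, simplified]
        have J0: "Jmin > 0" by (rule Jmin_pos[OF Ac])
        have MI: "min_over I A = \<infinity>" using A0 by (simp add: min_over_def)
        note MJ = MJ MJ[unfolded A0, simplified]
        have "asym_le ?T (\<lambda>x. ereal (fst (snd x) / Jmin)) ?F"
          by (rule checkLt_l0[OF cl Au A0 fb])
        then show ?thesis
        proof (rule asym_le_cong)
          show "eventually (\<lambda>x. ereal (fst (snd x) / Jmin) = ?G x) ?F"
            using ev_ge[OF fb, of 0]
            by eventually_elim (use cl J0 in \<open>auto split: prod.splits simp: MJ MI max_def divide_le_0_iff\<close>)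
        qed
      next
        case An: False
        have Ac: "{1..K} - A \<noteq> {}" using cl lu uK Ac_ne by auto
        note MJ = min_over_J[OF Ac] min_over_J[OF Ac, simplified]
        have J0: "Jmin > 0" by (rule Jmin_pos[OF Ac])
        have I0: "Imin > 0" by (rule Imin_pos[OF An])
        have "asym_le ?T (\<lambda>x. ereal (max (fst (snd x) / Jmin) (min (fst x / Imin) (fst (snd (snd x)) / (Imin + Jmin))))) ?F"
          by (rule checkLt_l[OF cl Au An Ac fa fb fc])
        then show ?thesis
          by (rule asym_le_eq) (use cl I0 J0 in \<open>auto split: prod.splits simp: MJ min_over_I[OF An]\<close>)
      qed
    next
      case ncl: False
      show ?thesis
      proof (cases "card A < u")
        case True
        have An: "A \<noteq> {}" using ncl lA by auto
        have Ac: "{1..K} - A \<noteq> {}" using True uK Ac_ne by auto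
        note MJ = min_over_J[OF Ac] min_over_J[OF Ac, simplified]
        have J0: "Jmin > 0" by (rule Jmin_pos[OF Ac])
        have I0: "Imin > 0" by (rule Imin_pos[OF An])
        have "asym_le ?T (\<lambda>x. ereal (max (fst x / Imin) (fst (snd x) / Jmin))) ?F"
          by (rule checkLt_mid[OF lA Au An Ac fa fb])
        then show ?thesis
          by (rule asym_le_eq) (use ncl True I0 J0 in \<open>auto split: prod.splits simp: MJ min_over_I[OF An]\<close>)
      next
        case False
        then have cu: "card A = u" using Au by simp
        have An: "A \<noteq> {}" using cu u0 by auto
        have I0: "Imin > 0" by (rule Imin_pos[OF An])
        show ?thesis
        proof (cases "{1..K} - A = {}")
          case Ac0: True
          have "asym_le ?T (\<lambda>x. ereal (fst x / Imin)) ?F"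
            by (rule checkLt_all[OF lA Au An Ac0 fa])
          then show ?thesis
          proof (rule asym_le_cong)
            have MJ: "min_over J ({1..K} - A) = \<infinity>" "min_over J ({Suc 0..K} - A) = \<infinity>" using Ac0 by (simp_all add: min_over_def)
            show "eventually (\<lambda>x. ereal (fst x / Imin) = ?G x) ?F"
              using ev_ge[OF fa, of 0]
              by eventually_elim (use ncl False I0 in \<open>auto split: prod.splits simp: MJ min_over_I[OF An] max_def divide_le_0_iff\<close>)
          qed
        next
          case Ac: False
          note MJ = min_over_J[OF Ac] min_over_J[OF Ac, simplified]
          have J0: "Jmin > 0" by (rule Jmin_pos[OF Ac])
          have "asym_le ?T (\<lambda>x. ereal (max (fst x / Imin) (min (fst (snd x) / Jmin) (snd (snd (snd x)) / (Jmin + Imin))))) ?F"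
            by (rule checkLt_u[OF cu lA An Ac fa fb fd])
          then show ?thesis
            by (rule asym_le_eq) (use ncl False I0 J0 in \<open>auto split: prod.splits simp: MJ min_over_I[OF An]\<close>)
        qed
      qed
    qed
    then show "asym_le (\<lambda>(a, b, c, d). expect_time (joint_law K P0 P1 A) (check_time_lt K l u a b c d lam)) ?G ?F"
      unfolding Tq .
  qed
qed


lemma final_part:
  fixes F :: "'x filter" and fa fb fc fd :: "'x \<Rightarrow> real"
  assumes cond: "l \<le> u \<and> u \<le> K \<and> 0 < u \<and> l < K \<and> l \<le> card A \<and> card A \<le> u" and lu: "l < u"
    and fa: "filterlim fa at_top F" and fb: "filterlim fb at_top F"
    and fc: "filterlim fc at_top F" and fd: "filterlim fd at_top F"
    and rac: "((\<lambda>x. fa x / fc x) \<longlongrightarrow> 1) F" and rbd: "((\<lambda>x. fb x / fd x) \<longlongrightarrow> 1) F"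
  shows "(\<forall>i\<in>A. asym_le
               (\<lambda>x. expect_time (joint_law K P0 P1 A)
                      (hat_time_lt K l u (fa x) (fb x) (fc x) (fd x) lam i))
               (\<lambda>x. ereal (fa x) /
                      (ereal (I i) + (if card A = l then min_over J ({1..K} - A) else 0)))
               F) \<and>
            (\<forall>j\<in>{1..K} - A. asym_le
               (\<lambda>x. expect_time (joint_law K P0 P1 A)
                      (hat_time_lt K l u (fa x) (fb x) (fc x) (fd x) lam j))
               (\<lambda>x. ereal (fb x) /
                      (ereal (J j) + (if card A = u then min_over I A else 0)))
               F) \<and>
            asym_le
               (\<lambda>x. expect_time (joint_law K P0 P1 A)
                      (check_time_lt K l u (fa x) (fb x) (fc x) (fd x) lam))
               (\<lambda>x. max
                  (ereal (fa x) / (min_over I A +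
                      (if card A = l then min_over J ({1..K} - A) else 0)))
                  (ereal (fb x) / (min_over J ({1..K} - A) +
                      (if card A = u then min_over I A else 0))))
               F"
proof -
  have uK: "u \<le> K" and u0: "0 < u" and lA: "l \<le> card A" and Au: "card A \<le> u" using cond by auto
  have ca: "eventually (\<lambda>x. fc x \<le> (1+\<eta>) * fa x) F" if "\<eta> > 0" for \<eta> by (rule ratio_ev[OF rac fc that])
  have db: "eventually (\<lambda>x. fd x \<le> (1+\<eta>) * fb x) F" if "\<eta> > 0" for \<eta> by (rule ratio_ev[OF rbd fd that])
  show ?thesis
  proof (intro conjI ballI)
    fix i assume i: "i \<in> A"
    have Ii: "I i > 0" using I_pos A_sub i by auto
    show "asym_le (\<lambda>x. expect_time (joint_law K P0 P1 A) (hat_time_lt K l u (fa x) (fb x) (fc x) (fd x) lam i))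
               (\<lambda>x. ereal (fa x) / (ereal (I i) + (if card A = l then min_over J ({1..K} - A) else 0))) F"
    proof (cases "card A = l")
      case True
      have Ac: "{1..K} - A \<noteq> {}" using True lu uK Ac_ne by auto
      note MJ = min_over_J[OF Ac] min_over_J[OF Ac, simplified]
      have J0: "Jmin > 0" by (rule Jmin_pos[OF Ac])
      have R0: "I i + Jmin > 0" using Ii J0 by simp
      have "asym_le (\<lambda>x. expect_time PA (hat_time_lt K l u (fa x) (fb x) (fc x) (fd x) lam i))
         (\<lambda>x. ereal (min (fa x / I i) (fc x / (I i + Jmin)))) F"
        by (rule hatLtA_l[OF i True Ac fa fc])
      then have "asym_le (\<lambda>x. expect_time PA (hat_time_lt K l u (fa x) (fb x) (fc x) (fd x) lam i))
         (\<lambda>x. ereal (fa x / (I i + Jmin))) F"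
      proof (rule asym_le_trans)
        fix \<eta> :: real assume \<eta>: "\<eta> > 0"
        show "eventually (\<lambda>x. min (fa x / I i) (fc x / (I i + Jmin)) \<le> (1+\<eta>) * (fa x / (I i + Jmin))) F"
          using ca[OF \<eta>] by eventually_elim (use scale_div[OF R0] in \<open>simp add: min.coboundedI2\<close>)
      next
        show "eventually (\<lambda>x. 0 \<le> fa x / (I i + Jmin)) F"
          using ev_ge[OF fa, of 0] by eventually_elim (use R0 in simp)
      qed
      then show ?thesis by (rule asym_le_eq) (use True Ii J0 in \<open>auto simp: MJ\<close>)
    next
      case False
      have "asym_le (\<lambda>x. expect_time PA (hat_time_lt K l u (fa x) (fb x) (fc x) (fd x) lam i))
         (\<lambda>x. ereal (fa x / I i)) F"
        by (rule hatLtA[OF i fa])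
      then show ?thesis by (rule asym_le_eq) (use False Ii in auto)
    qed
  next
    fix j assume j: "j \<in> {1..K} - A"
    have Jj: "J j > 0" using J_pos j by auto
    show "asym_le (\<lambda>x. expect_time (joint_law K P0 P1 A) (hat_time_lt K l u (fa x) (fb x) (fc x) (fd x) lam j))
               (\<lambda>x. ereal (fb x) / (ereal (J j) + (if card A = u then min_over I A else 0))) F"
    proof (cases "card A = u")
      case True
      have An: "A \<noteq> {}" using True u0 by auto
      have I0: "Imin > 0" by (rule Imin_pos[OF An])
      have R0: "J j + Imin > 0" using Jj I0 by simp
      have "asym_le (\<lambda>x. expect_time PA (hat_time_lt K l u (fa x) (fb x) (fc x) (fd x) lam j))
         (\<lambda>x. ereal (min (fb x / J j) (fd x / (J j + Imin)))) F"
        by (rule hatLtB_u[OF j True An fb fd])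
      then have "asym_le (\<lambda>x. expect_time PA (hat_time_lt K l u (fa x) (fb x) (fc x) (fd x) lam j))
         (\<lambda>x. ereal (fb x / (J j + Imin))) F"
      proof (rule asym_le_trans)
        fix \<eta> :: real assume \<eta>: "\<eta> > 0"
        show "eventually (\<lambda>x. min (fb x / J j) (fd x / (J j + Imin)) \<le> (1+\<eta>) * (fb x / (J j + Imin))) F"
          using db[OF \<eta>] by eventually_elim (use scale_div[OF R0] in \<open>simp add: min.coboundedI2\<close>)
      next
        show "eventually (\<lambda>x. 0 \<le> fb x / (J j + Imin)) F"
          using ev_ge[OF fb, of 0] by eventually_elim (use R0 in simp)
      qed
      then show ?thesis by (rule asym_le_eq) (use True Jj I0 in \<open>auto simp: min_over_I[OF An]\<close>)
    next
      case False
      have "asym_le (\<lambda>x. expect_time PA (hat_time_lt K l u (fa x) (fb x) (fc x) (fd x) lam j))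
         (\<lambda>x. ereal (fb x / J j)) F"
        by (rule hatLtB[OF j fb])
      then show ?thesis by (rule asym_le_eq) (use False Jj in auto)
    qed
  next
    let ?T = "\<lambda>x. expect_time PA (check_time_lt K l u (fa x) (fb x) (fc x) (fd x) lam)"
    let ?G = "\<lambda>x. max
                  (ereal (fa x) / (min_over I A +
                      (if card A = l then min_over J ({1..K} - A) else 0)))
                  (ereal (fb x) / (min_over J ({1..K} - A) +
                      (if card A = u then min_over I A else 0)))"
    show "asym_le ?T ?G F"
    proof (cases "card A = l")
      case cl: True
      have ncu: "card A \<noteq> u" using cl lu by simp
      show ?thesis
      proof (cases "A = {}")
        case A0: True
        have Ac: "{1..K} - A \<noteq> {}" using A0 K_pos by auto
        note MJ = min_over_J[OF Ac] min_over_J[OF Ac, simplified]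
        have J0: "Jmin > 0" by (rule Jmin_pos[OF Ac])
        have MI: "min_over I A = \<infinity>" using A0 by (simp add: min_over_def)
        have "asym_le ?T (\<lambda>x. ereal (fb x / Jmin)) F"
          by (rule checkLt_l0[OF cl Au A0 fb])
        then show ?thesis
        proof (rule asym_le_cong)
          show "eventually (\<lambda>x. ereal (fb x / Jmin) = ?G x) F"
            using ev_ge[OF fb, of 0]
            by eventually_elim (use cl ncu J0 in \<open>auto simp: MJ MI max_def divide_le_0_iff\<close>)
        qed
      next
        case An: False
        have Ac: "{1..K} - A \<noteq> {}" using cl lu uK Ac_ne by auto
        note MJ = min_over_J[OF Ac] min_over_J[OF Ac, simplified]
        have J0: "Jmin > 0" by (rule Jmin_pos[OF Ac])
        have I0: "Imin > 0" by (rule Imin_pos[OF An])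
        have R0: "Imin + Jmin > 0" using I0 J0 by simp
        have "asym_le ?T (\<lambda>x. ereal (max (fb x / Jmin) (min (fa x / Imin) (fc x / (Imin + Jmin))))) F"
          by (rule checkLt_l[OF cl Au An Ac fa fb fc])
        then have "asym_le ?T (\<lambda>x. ereal (max (fa x / (Imin + Jmin)) (fb x / Jmin))) F"
        proof (rule asym_le_trans)
          fix \<eta> :: real assume \<eta>: "\<eta> > 0"
          show "eventually (\<lambda>x. max (fb x / Jmin) (min (fa x / Imin) (fc x / (Imin + Jmin))) \<le> (1+\<eta>) * max (fa x / (Imin + Jmin)) (fb x / Jmin)) F"
            using ca[OF \<eta>] ev_ge[OF fb, of 0]
          proof eventually_elim
            case (elim x)
            have "max (fb x / Jmin) (min (fa x / Imin) (fc x / (Imin + Jmin))) \<le> (1+\<eta>) * max (fb x / Jmin) (fa x / (Imin + Jmin))"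
              by (rule max_scale[OF self_scale]) (use elim \<eta> J0 scale_div[OF R0] in \<open>auto simp: min.coboundedI2\<close>)
            then show ?case by (simp add: max.commute)
          qed
        next
          show "eventually (\<lambda>x. 0 \<le> max (fa x / (Imin + Jmin)) (fb x / Jmin)) F"
            using ev_ge[OF fb, of 0] by eventually_elim (use J0 in \<open>simp add: max.coboundedI2\<close>)
        qed
        then show ?thesis by (rule asym_le_eq) (use cl ncu I0 J0 in \<open>auto simp: MJ min_over_I[OF An]\<close>)
      qed
    next
      case ncl: False
      show ?thesis
      proof (cases "card A < u")
        case True
        have ncu: "card A \<noteq> u" using True by simp
        have An: "A \<noteq> {}" using ncl lA by auto
        have Ac: "{1..K} - A \<noteq> {}" using True uK Ac_ne by auto
        note MJ = min_over_J[OF Ac] min_over_J[OF Ac, simplified]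
        have J0: "Jmin > 0" by (rule Jmin_pos[OF Ac])
        have I0: "Imin > 0" by (rule Imin_pos[OF An])
        have "asym_le ?T (\<lambda>x. ereal (max (fa x / Imin) (fb x / Jmin))) F"
          by (rule checkLt_mid[OF lA Au An Ac fa fb])
        then show ?thesis
          by (rule asym_le_eq) (use ncl ncu I0 J0 in \<open>auto simp: MJ min_over_I[OF An]\<close>)
      next
        case False
        then have cu: "card A = u" using Au by simp
        have An: "A \<noteq> {}" using cu u0 by auto
        have I0: "Imin > 0" by (rule Imin_pos[OF An])
        show ?thesis
        proof (cases "{1..K} - A = {}")
          case Ac0: True
          have "asym_le ?T (\<lambda>x. ereal (fa x / Imin)) F"
            by (rule checkLt_all[OF lA Au An Ac0 fa])
          then show ?thesis
          proof (rule asym_le_cong)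
            have MJ: "min_over J ({1..K} - A) = \<infinity>" "min_over J ({Suc 0..K} - A) = \<infinity>" using Ac0 by (simp_all add: min_over_def)
            show "eventually (\<lambda>x. ereal (fa x / Imin) = ?G x) F"
              using ev_ge[OF fa, of 0]
              by eventually_elim (use ncl cu I0 in \<open>auto simp: MJ min_over_I[OF An] max_def divide_le_0_iff\<close>)
          qed
        next
          case Ac: False
          note MJ = min_over_J[OF Ac] min_over_J[OF Ac, simplified]
          have J0: "Jmin > 0" by (rule Jmin_pos[OF Ac])
          have R0: "Jmin + Imin > 0" using I0 J0 by simp
          have "asym_le ?T (\<lambda>x. ereal (max (fa x / Imin) (min (fb x / Jmin) (fd x / (Jmin + Imin))))) F"
            by (rule checkLt_u[OF cu lA An Ac fa fb fd])
          then have "asym_le ?T (\<lambda>x. ereal (max (fa x / Imin) (fb x / (Jmin + Imin)))) F"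
          proof (rule asym_le_trans)
            fix \<eta> :: real assume \<eta>: "\<eta> > 0"
            show "eventually (\<lambda>x. max (fa x / Imin) (min (fb x / Jmin) (fd x / (Jmin + Imin))) \<le> (1+\<eta>) * max (fa x / Imin) (fb x / (Jmin + Imin))) F"
              using db[OF \<eta>] ev_ge[OF fa, of 0]
            proof eventually_elim
              case (elim x)
              show ?case
                by (rule max_scale[OF self_scale]) (use elim \<eta> I0 scale_div[OF R0] in \<open>auto simp: min.coboundedI2\<close>)
            qed
          next
            show "eventually (\<lambda>x. 0 \<le> max (fa x / Imin) (fb x / (Jmin + Imin))) F"
              using ev_ge[OF fa, of 0] by eventually_elim (use I0 in \<open>simp add: max.coboundedI1\<close>)
          qed
          then show ?thesis
            by (rule asym_le_eq) (use ncl cu I0 J0 in \<open>auto simp: MJ min_over_I[OF An]\<close>)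
        qed
      qed
    qed
  qed
qed

end

theorem proposition4p2:
  fixes K :: nat
    and M :: "nat \<Rightarrow> 'a measure"
    and P0 P1 :: "nat \<Rightarrow> (nat \<Rightarrow> 'a) measure"
    and lam :: "nat \<Rightarrow> nat \<Rightarrow> (nat \<Rightarrow> 'a) \<Rightarrow> real"
    and I J :: "nat \<Rightarrow> real"
    and A :: "nat set"
    and l u :: nat
  assumes K_pos: "K \<ge> 1"
    and P0_prob: "\<And>k. k \<in> {1..K} \<Longrightarrow> prob_space (P0 k)"
    and P1_prob: "\<And>k. k \<in> {1..K} \<Longrightarrow> prob_space (P1 k)"
    and P0_sets: "\<And>k. k \<in> {1..K} \<Longrightarrow> sets (P0 k) = sets (path_space (M k))"
    and P1_sets: "\<And>k. k \<in> {1..K} \<Longrightarrow> sets (P1 k) = sets (path_space (M k))"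
    and llr: "\<And>k. k \<in> {1..K} \<Longrightarrow> is_llr (M k) (P0 k) (P1 k) (lam k)"
    and I_pos: "\<And>k. k \<in> {1..K} \<Longrightarrow> I k > 0"
    and J_pos: "\<And>k. k \<in> {1..K} \<Longrightarrow> J k > 0"
    and I_compl: "\<And>k \<epsilon>. k \<in> {1..K} \<Longrightarrow> \<epsilon> > 0 \<Longrightarrow>
        summable (\<lambda>n. measure (P1 k)
          {\<omega> \<in> space (P1 k). lam k (Suc n) \<omega> / real (Suc n) \<le> I k - \<epsilon>})"
    and J_compl: "\<And>k \<epsilon>. k \<in> {1..K} \<Longrightarrow> \<epsilon> > 0 \<Longrightarrow>
        summable (\<lambda>n. measure (P0 k)
          {\<omega> \<in> space (P0 k). - lam k (Suc n) \<omega> / real (Suc n) \<le> J k - \<epsilon>})"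
    and A_sub: "A \<subseteq> {1..K}"
  shows
   "(\<forall>i\<in>A. asym_le
        (\<lambda>(a, b). expect_time (joint_law K P0 P1 A) (sprt_time lam a b i))
        (\<lambda>(a, b). ereal a / ereal (I i))
        (at_top \<times>\<^sub>F at_top)) \<and>
    (\<forall>j\<in>{1..K} - A. asym_le
        (\<lambda>(a, b). expect_time (joint_law K P0 P1 A) (sprt_time lam a b j))
        (\<lambda>(a, b). ereal b / ereal (J j))
        (at_top \<times>\<^sub>F at_top)) \<and>
    ((l \<le> u \<and> u \<le> K \<and> 0 < u \<and> l < K \<and> l \<le> card A \<and> card A \<le> u) \<longrightarrow>
      ((l = u \<longrightarrow>
         (\<forall>i\<in>A. asym_le
            (\<lambda>(c, d). expect_time (joint_law K P0 P1 A) (hat_time_eq K l c d lam i))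
            (\<lambda>(c, d). ereal c / (ereal (I i) + min_over J ({1..K} - A)))
            (at_top \<times>\<^sub>F at_top)) \<and>
         (\<forall>j\<in>{1..K} - A. asym_le
            (\<lambda>(c, d). expect_time (joint_law K P0 P1 A) (hat_time_eq K l c d lam j))
            (\<lambda>(c, d). ereal d / (ereal (J j) + min_over I A))
            (at_top \<times>\<^sub>F at_top)) \<and>
         asym_le
            (\<lambda>(c, d). expect_time (joint_law K P0 P1 A) (check_time_eq K l c d lam))
            (\<lambda>(c, d). ereal (max c d) / (min_over I A + min_over J ({1..K} - A)))
            (at_top \<times>\<^sub>F at_top)) \<and>
       (l < u \<longrightarrow>
         (\<forall>i\<in>A. asym_le
            (\<lambda>(a, b, c, d). expect_time (joint_law K P0 P1 A) (hat_time_lt K l u a b c d lam i))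
            (\<lambda>(a, b, c, d). if card A = l
                then min (ereal a / ereal (I i)) (ereal c / (ereal (I i) + min_over J ({1..K} - A)))
                else ereal a / ereal (I i))
            (at_top \<times>\<^sub>F (at_top \<times>\<^sub>F (at_top \<times>\<^sub>F at_top)))) \<and>
         (\<forall>j\<in>{1..K} - A. asym_le
            (\<lambda>(a, b, c, d). expect_time (joint_law K P0 P1 A) (hat_time_lt K l u a b c d lam j))
            (\<lambda>(a, b, c, d). if card A = u
                then min (ereal b / ereal (J j)) (ereal d / (ereal (J j) + min_over I A))
                else ereal b / ereal (J j))
            (at_top \<times>\<^sub>F (at_top \<times>\<^sub>F (at_top \<times>\<^sub>F at_top)))) \<and>
         asym_le
            (\<lambda>(a, b, c, d). expect_time (joint_law K P0 P1 A) (check_time_lt K l u a b c d lam))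
            (\<lambda>(a, b, c, d).
               if card A = l then
                 max (ereal b / min_over J ({1..K} - A))
                     (min (ereal a / min_over I A)
                          (ereal c / (min_over I A + min_over J ({1..K} - A))))
               else if card A < u then
                 max (ereal a / min_over I A) (ereal b / min_over J ({1..K} - A))
               else
                 max (ereal a / min_over I A)
                     (min (ereal b / min_over J ({1..K} - A))
                          (ereal d / (min_over J ({1..K} - A) + min_over I A))))
            (at_top \<times>\<^sub>F (at_top \<times>\<^sub>F (at_top \<times>\<^sub>F at_top))) \<and>
         (\<forall>(F :: 'x filter) (fa :: 'x \<Rightarrow> real) fb fc fd.
            filterlim fa at_top F \<and> filterlim fb at_top F \<and>
            filterlim fc at_top F \<and> filterlim fd at_top F \<and>
            ((\<lambda>x. fa x / fc x) \<longlongrightarrow> 1) F \<and> ((\<lambda>x. fb x / fd x) \<longlongrightarrow> 1) F \<longrightarrow>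
            (\<forall>i\<in>A. asym_le
               (\<lambda>x. expect_time (joint_law K P0 P1 A)
                      (hat_time_lt K l u (fa x) (fb x) (fc x) (fd x) lam i))
               (\<lambda>x. ereal (fa x) /
                      (ereal (I i) + (if card A = l then min_over J ({1..K} - A) else 0)))
               F) \<and>
            (\<forall>j\<in>{1..K} - A. asym_le
               (\<lambda>x. expect_time (joint_law K P0 P1 A)
                      (hat_time_lt K l u (fa x) (fb x) (fc x) (fd x) lam j))
               (\<lambda>x. ereal (fb x) /
                      (ereal (J j) + (if card A = u then min_over I A else 0)))
               F) \<and>
            asym_le
               (\<lambda>x. expect_time (joint_law K P0 P1 A)
                      (check_time_lt K l u (fa x) (fb x) (fc x) (fd x) lam))
               (\<lambda>x. max
                  (ereal (fa x) / (min_over I A +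
                      (if card A = l then min_over J ({1..K} - A) else 0)))
                  (ereal (fb x) / (min_over J ({1..K} - A) +
                      (if card A = u then min_over I A else 0))))
               F))))"
proof -
  interpret S: setup_llr K M P0 P1 lam I J A
    by (rule setup_llr.intro) (fact K_pos P0_prob P1_prob P0_sets P1_sets llr I_pos J_pos I_compl J_compl A_sub)+
  show ?thesis
    apply (intro conjI impI allI)
    apply (rule S.final_sprtA)
    apply (rule S.final_sprtB)
    apply (rule S.final_eq[THEN conjunct1]; assumption)
    apply (rule S.final_eq[THEN conjunct2, THEN conjunct1]; assumption)
    apply (rule S.final_eq[THEN conjunct2, THEN conjunct2]; assumption)
    apply (rule S.final_lt[THEN conjunct1]; assumption)
    apply (rule S.final_lt[THEN conjunct2, THEN conjunct1]; assumption)
    apply (rule S.final_lt[THEN conjunct2, THEN conjunct2]; assumption)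
    apply (rule S.final_part[THEN conjunct1]; (assumption | blast))
    apply (rule S.final_part[THEN conjunct2, THEN conjunct1]; (assumption | blast))
    apply (rule S.final_part[THEN conjunct2, THEN conjunct2]; (assumption | blast))
    done
qed

end
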